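(* Let $\mathcal{F}$ be a $3$-uniform linear family and let $\mathcal{M}$ be a maximum matching of $\mathcal{F}$. If $A,B,C$ are three distinct members of $\mathcal{M}$, then $|D_2(A,B,C)|\leq 21$.
   Context: A family is a finite collection of distinct subsets of a vertex set; $3$-uniform means every member has exactly $3$ elements and linear means any two distinct members share at most one vertex. A matching is a collection of pairwise disjoint members; a maximum matching is one of largest possible size. $X_{\mathcal{M}}=\bigcup_{A\in\mathcal{M}}A$, $D_2(\mathcal{F})=\{E\in\mathcal{F}:|E\cap X_{\mathcal{M}}|=2\}$, and for $A,B,C\in\mathcal{M}$, $D_2(A,B,C)=\{E\in D_2(\mathcal{F}): |E\cap(A\cup B\cup C)|=2\}$. *)

theory Defs
  imports Main
begin

definition uniform3 :: "'a set set \<Rightarrow> bool" where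
  "uniform3 F \<longleftrightarrow> (\<forall>E\<in>F. card E = 3)"

definition linear_family :: "'a set set \<Rightarrow> bool" where
  "linear_family F \<longleftrightarrow> (\<forall>E\<in>F. \<forall>E'\<in>F. E \<noteq> E' \<longrightarrow> card (E \<inter> E') \<le> 1)"

definition matching :: "'a set set \<Rightarrow> 'a set set \<Rightarrow> bool" where
  "matching F M \<longleftrightarrow> M \<subseteq> F \<and> (\<forall>A\<in>M. \<forall>B\<in>M. A \<noteq> B \<longrightarrow> A \<inter> B = {})"

definition maximum_matching :: "'a set set \<Rightarrow> 'a set set \<Rightarrow> bool" where
  "maximum_matching F M \<longleftrightarrow> matching F M \<and> (\<forall>M'. matching F M' \<longrightarrow> card M' \<le> card M)"

definition X_M :: "'a set set \<Rightarrow> 'a set" where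
  "X_M M = \<Union>M"

definition D2 :: "'a set set \<Rightarrow> 'a set set \<Rightarrow> 'a set set" where
  "D2 F M = {E\<in>F. card (E \<inter> X_M M) = 2}"

definition D2_ABC :: "'a set set \<Rightarrow> 'a set set \<Rightarrow> 'a set \<Rightarrow> 'a set \<Rightarrow> 'a set \<Rightarrow> 'a set set" where
  "D2_ABC F M A B C = {E\<in>D2 F M. card (E \<inter> (A \<union> B \<union> C)) = 2}"

end

theory Submission
  imports Defs
begin

definition pmfree :: "('a\<Rightarrow>'a\<Rightarrow>bool) \<Rightarrow> ('a\<Rightarrow>'a\<Rightarrow>'b) \<Rightarrow> 'a set \<Rightarrow> 'a set \<Rightarrow> bool" where
 "pmfree adj col P Q \<longleftrightarrow> (\<forall>p1 p2 p3 q1 q2 q3. p1\<in>P \<longrightarrow> p2\<in>P \<longrightarrow> p3\<in>P \<longrightarrow> q1\<in>Q \<longrightarrow> q2\<in>Q \<longrightarrow> q3\<in>Q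
   \<longrightarrow> distinct[p1,p2,p3] \<longrightarrow> distinct[q1,q2,q3] \<longrightarrow> adj p1 q1 \<longrightarrow> adj p2 q2 \<longrightarrow> adj p3 q3
   \<longrightarrow> \<not> distinct [col p1 q1, col p2 q2, col p3 q3])"

definition good :: "'a set \<Rightarrow> 'a set \<Rightarrow> 'a set \<Rightarrow> ('a\<Rightarrow>'a\<Rightarrow>bool) \<Rightarrow> ('a\<Rightarrow>'a\<Rightarrow>'b) \<Rightarrow> bool" where
 "good A B C adj col \<longleftrightarrow> card A = 3 \<and> card B = 3 \<and> card C = 3 \<and> A\<inter>B={} \<and> A\<inter>C={} \<and> B\<inter>C={} \<and>
   (\<forall>x y. adj x y = adj y x) \<and> (\<forall>x y. col x y = col y x) \<and>
   (\<forall>x y z. adj x y \<longrightarrow> adj x z \<longrightarrow> y\<noteq>z \<longrightarrow> col x y \<noteq> col x z) \<and>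
   pmfree adj col A B \<and> pmfree adj col A C \<and> pmfree adj col B C \<and>
   (\<forall>x1 y1 x2 y2 x3 y3 x4 y4. distinct [x1,y1,x2,y2,x3,y3,x4,y4] \<longrightarrow> adj x1 y1 \<longrightarrow> adj x2 y2 \<longrightarrow> adj x3 y3 \<longrightarrow> adj x4 y4
      \<longrightarrow> \<not> distinct [col x1 y1, col x2 y2, col x3 y3, col x4 y4])"

definition np :: "'a set \<Rightarrow> 'a set \<Rightarrow> ('a\<Rightarrow>'a\<Rightarrow>bool) \<Rightarrow> nat" where
 "np P Q adj = card {(p,q). p\<in>P \<and> q\<in>Q \<and> adj p q}"

lemma card3E:
  assumes "card S = 3" obtains x y z where "S = {x,y,z}" "distinct [x,y,z]"
  using assms unfolding card_3_iff by auto

lemma card3_at: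
  assumes "card S = 3" "x \<in> S" obtains y z where "S = {y,z,x}" "distinct [y,z,x]"
proof -
  have "card (S - {x}) = 2" using assms by (simp add: card_Diff_singleton_if)
  then obtain y z where "S - {x} = {y,z}" "y \<noteq> z" unfolding card_2_iff by auto
  then have "S = {y,z,x}" "distinct [y,z,x]" using assms(2) by auto
  then show ?thesis using that by blast
qed

lemma pmfree_sym:
  assumes sa: "\<forall>x y. adj x y = adj y x" and sy: "\<forall>x y. col x y = col y x" and p: "pmfree adj col P Q"
  shows "pmfree adj col Q P"
  unfolding pmfree_def
proof (intro allI impI)
  fix p1 p2 p3 q1 q2 q3
  assume h: "p1\<in>Q" "p2\<in>Q" "p3\<in>Q" "q1\<in>P" "q2\<in>P" "q3\<in>P" "distinct[p1,p2,p3]" "distinct[q1,q2,q3]"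
    "adj p1 q1" "adj p2 q2" "adj p3 q3"
  have a: "adj q1 p1" "adj q2 p2" "adj q3 p3" using h(9-11) sa by blast+
  have "\<not> distinct [col q1 p1, col q2 p2, col q3 p3]"
    using p[unfolded pmfree_def, rule_format, OF h(4) h(5) h(6) h(1) h(2) h(3) h(8) h(7) a] .
  moreover have "col q1 p1 = col p1 q1" "col q2 p2 = col p2 q2" "col q3 p3 = col p3 q3" using sy by blast+
  ultimately show "\<not> distinct [col p1 q1, col p2 q2, col p3 q3]" by simp
qed

lemma good_swap12:
  assumes g: "good A B C adj col" shows "good B A C adj col"
proof -
  note G = g[unfolded good_def]
  have sa: "\<forall>x y. adj x y = adj y x" and sy: "\<forall>x y. col x y = col y x" and p: "pmfree adj col A B"
    using G by blast+
  have n1: "pmfree adj col B A" using pmfree_sym[OF sa sy p] .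
  have n2: "B \<inter> A = {}" using G by blast
  show ?thesis unfolding good_def using G n1 n2 by (elim conjE) (intro conjI; assumption)
qed

lemma good_swap23:
  assumes g: "good A B C adj col" shows "good A C B adj col"
proof -
  note G = g[unfolded good_def]
  have sa: "\<forall>x y. adj x y = adj y x" and sy: "\<forall>x y. col x y = col y x" and p: "pmfree adj col B C"
    using G by blast+
  have n1: "pmfree adj col C B" using pmfree_sym[OF sa sy p] .
  have n2: "C \<inter> B = {}" using G by blast
  show ?thesis unfolding good_def using G n1 n2 by (elim conjE) (intro conjI; assumption)
qed

lemma np_sym: "(\<forall>x y. adj x y = adj y x) \<Longrightarrow> np P Q adj = np Q P adj"
  unfolding np_def
proof -
  assume s: "\<forall>x y. adj x y = adj y x"
  have "{(p,q). p\<in>P \<and> q\<in>Q \<and> adj p q} = prod.swap ` {(q,p). q\<in>Q \<and> p\<in>P \<and> adj q p}"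
    using s by (auto simp: image_iff)
  then show "card {(p,q). p\<in>P \<and> q\<in>Q \<and> adj p q} = card {(q,p). q\<in>Q \<and> p\<in>P \<and> adj q p}"
    by (simp add: card_image)
qed

lemma np_sum: "finite P \<Longrightarrow> finite Q \<Longrightarrow> np P Q adj = (\<Sum>p\<in>P. card {q\<in>Q. adj p q})"
proof -
  assume f: "finite P" "finite Q"
  have "{(p,q). p\<in>P \<and> q\<in>Q \<and> adj p q} = Sigma P (\<lambda>p. {q\<in>Q. adj p q})" by auto
  then show ?thesis unfolding np_def using f by (simp add: card_SigmaI)
qed

lemma np_le:
  assumes "finite P" "finite Q" "card P = 3" "card Q = 3"
  shows "np P Q adj \<le> 9"
proof -
  have "np P Q adj \<le> card (P \<times> Q)" unfolding np_def using assms by (intro card_mono) auto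
  then show ?thesis using assms by (simp add: card_cartesian_product)
qed

lemma np_le_miss1:
  assumes "finite P" "finite Q" "card P = 3" "card Q = 3" "p\<in>P" "q\<in>Q" "\<not> adj p q"
  shows "np P Q adj \<le> 8"
proof -
  have "np P Q adj \<le> card (P \<times> Q - {(p,q)})" unfolding np_def using assms by (intro card_mono) auto
  then show ?thesis using assms by (simp add: card_cartesian_product)
qed

lemma np_le_miss2:
  assumes "finite P" "finite Q" "card P = 3" "card Q = 3" "p\<in>P" "q\<in>Q" "\<not> adj p q"
    "p'\<in>P" "q'\<in>Q" "\<not> adj p' q'" "(p,q) \<noteq> (p',q')"
  shows "np P Q adj \<le> 7"
proof -
  have "np P Q adj \<le> card (P \<times> Q - {(p,q),(p',q')})" unfolding np_def using assms by (intro card_mono) auto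
  moreover have "card (P \<times> Q - {(p,q),(p',q')}) = 9 - 2"
    using assms by (subst card_Diff_subset) (auto simp: card_cartesian_product)
  ultimately show ?thesis by simp
qed

lemma deg3:
  assumes "distinct [a1,a2,a3]" "card {a\<in>{a1,a2,a3}. R a} = 3"
  shows "R a1 \<and> R a2 \<and> R a3"
proof -
  have "{a\<in>{a1,a2,a3}. R a} = {a1,a2,a3}"
    using assms by (intro card_subset_eq) auto
  then show ?thesis by auto
qed

lemma deg2:
  assumes "2 \<le> card {a\<in>{a1,a2,a3}. R a}"
  shows "\<exists>i j. i\<in>{a1,a2,a3} \<and> j\<in>{a1,a2,a3} \<and> i\<noteq>j \<and> R i \<and> R j"
proof (rule ccontr)
  assume "\<not> ?thesis"
  then have "card {a\<in>{a1,a2,a3}. R a} \<le> Suc 0"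
    by (subst card_le_Suc0_iff_eq) auto
  then show False using assms by simp
qed

lemma deg_le: "card {a\<in>{a1,a2,a3}. R a} \<le> 3"
proof -
  have "card {a\<in>{a1,a2,a3}. R a} \<le> card {a1,a2,a3}" by (intro card_mono) auto
  also have "\<dots> \<le> 3" by (simp add: card_insert_if)
  finally show ?thesis .
qed

lemma P9:
  assumes pm: "pmfree adj col P Q" and pr: "\<And>x y z. adj x y \<Longrightarrow> adj x z \<Longrightarrow> y\<noteq>z \<Longrightarrow> col x y \<noteq> col x z"
    and sy: "\<And>x y. col x y = col y x" and sa: "\<And>x y. adj x y = adj y x"
    and cP: "card P = 3" and cQ: "card Q = 3"
  shows "\<exists>p\<in>P. \<exists>q\<in>Q. \<not> adj p q"
proof (rule ccontr)
  assume "\<not> ?thesis"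
  hence all: "\<And>p q. p\<in>P \<Longrightarrow> q\<in>Q \<Longrightarrow> adj p q" by blast
  obtain p1 p2 p3 where P: "P = {p1,p2,p3}" "distinct [p1,p2,p3]" using cP by (rule card3E)
  obtain q1 q2 q3 where Q: "Q = {q1,q2,q3}" "distinct [q1,q2,q3]" using cQ by (rule card3E)
  have h: "\<And>x1 x2 x3 y1 y2 y3. x1\<in>P \<Longrightarrow> x2\<in>P \<Longrightarrow> x3\<in>P \<Longrightarrow> y1\<in>Q \<Longrightarrow> y2\<in>Q \<Longrightarrow> y3\<in>Q \<Longrightarrow> distinct[x1,x2,x3] \<Longrightarrow> distinct[y1,y2,y3] \<Longrightarrow> \<not> distinct [col x1 y1, col x2 y2, col x3 y3]"
    using pm all unfolding pmfree_def by blast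
  have p1: "\<not> distinct [col p1 q1, col p2 q2, col p3 q3]" by (rule h) (use P Q in auto)
  have p2: "\<not> distinct [col p1 q1, col p2 q3, col p3 q2]" by (rule h) (use P Q in auto)
  have p3: "\<not> distinct [col p1 q2, col p2 q1, col p3 q3]" by (rule h) (use P Q in auto)
  have p4: "\<not> distinct [col p1 q2, col p2 q3, col p3 q1]" by (rule h) (use P Q in auto)
  have p5: "\<not> distinct [col p1 q3, col p2 q1, col p3 q2]" by (rule h) (use P Q in auto)
  have p6: "\<not> distinct [col p1 q3, col p2 q2, col p3 q1]" by (rule h) (use P Q in auto)
  have a: "\<And>i j. i\<in>{p1,p2,p3} \<Longrightarrow> j\<in>{q1,q2,q3} \<Longrightarrow> adj i j" using all P Q by auto
  have r1: "\<And>i j k. i\<in>{p1,p2,p3} \<Longrightarrow> j\<in>{q1,q2,q3} \<Longrightarrow> k\<in>{q1,q2,q3} \<Longrightarrow> j\<noteq>k \<Longrightarrow> col i j \<noteq> col i k"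
    using pr a by blast
  have r2: "\<And>i j k. i\<in>{q1,q2,q3} \<Longrightarrow> j\<in>{p1,p2,p3} \<Longrightarrow> k\<in>{p1,p2,p3} \<Longrightarrow> j\<noteq>k \<Longrightarrow> col j i \<noteq> col k i"
    using pr a sy sa by metis
  show False using p1 p2 p3 p4 p5 p6 P(2) Q(2) r1 r2
    by simp (smt (verit))
qed
lemma P8:
  fixes col :: "'a \<Rightarrow> 'a \<Rightarrow> 'b"
  assumes pm: "pmfree adj col {b1,b2,b3} {c1,c2,c3}" and d: "distinct [b1,b2,b3]" "distinct [c1,c2,c3]"
  and pr: "\<And>x y z. adj x y \<Longrightarrow> adj x z \<Longrightarrow> y\<noteq>z \<Longrightarrow> col x y \<noteq> col x z"
  and sy: "\<And>x y. col x y = col y x" and sa: "\<And>x y. adj x y = adj y x"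
  and bc: "adj b1 c1" "adj b1 c2" "adj b1 c3" "adj b2 c1" "adj b2 c2" "adj b2 c3" "adj b3 c1" "adj b3 c2"
  shows "(col b1 c1 = col b2 c3 \<and> col b1 c2 = col b3 c1 \<and> col b2 c2 = col b1 c3 \<and> col b2 c1 = col b3 c2) \<or>
         (col b1 c1 = col b3 c2 \<and> col b2 c1 = col b1 c3 \<and> col b2 c2 = col b3 c1 \<and> col b1 c2 = col b2 c3)"
proof -
  have h: "\<And>x1 x2 x3 y1 y2 y3. x1\<in>{b1,b2,b3} \<Longrightarrow> x2\<in>{b1,b2,b3} \<Longrightarrow> x3\<in>{b1,b2,b3} \<Longrightarrow> y1\<in>{c1,c2,c3} \<Longrightarrow> y2\<in>{c1,c2,c3} \<Longrightarrow> y3\<in>{c1,c2,c3} \<Longrightarrow> distinct[x1,x2,x3] \<Longrightarrow> distinct[y1,y2,y3] \<Longrightarrow> adj x1 y1 \<Longrightarrow> adj x2 y2 \<Longrightarrow> adj x3 y3 \<Longrightarrow> \<not> distinct [col x1 y1, col x2 y2, col x3 y3]"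
    using pm unfolding pmfree_def by blast
  have 1: "\<not> distinct [col b1 c1, col b2 c3, col b3 c2]" by (rule h) (use d bc in auto)
  have 2: "\<not> distinct [col b1 c2, col b2 c3, col b3 c1]" by (rule h) (use d bc in auto)
  have 3: "\<not> distinct [col b1 c3, col b2 c1, col b3 c2]" by (rule h) (use d bc in auto)
  have 4: "\<not> distinct [col b1 c3, col b2 c2, col b3 c1]" by (rule h) (use d bc in auto)
  have rb: "\<And>x y z. x \<in> {b1,b2,b3} \<Longrightarrow> y \<in> {c1,c2,c3} \<Longrightarrow> z \<in> {c1,c2,c3} \<Longrightarrow> adj x y \<Longrightarrow> adj x z \<Longrightarrow> y\<noteq>z \<Longrightarrow> col x y \<noteq> col x z" using pr by blast
  have rc: "\<And>x y z. x \<in> {c1,c2,c3} \<Longrightarrow> y \<in> {b1,b2,b3} \<Longrightarrow> z \<in> {b1,b2,b3} \<Longrightarrow> adj y x \<Longrightarrow> adj z x \<Longrightarrow> y\<noteq>z \<Longrightarrow> col y x \<noteq> col z x" using pr sy sa by metis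
  show ?thesis using 1 2 3 4 rb rc bc d by simp (smt (verit))
qed
lemma leftover:
  fixes col :: "'a \<Rightarrow> 'a \<Rightarrow> 'b"
  assumes d: "distinct [a1,a2,a3,b,c,p1,q1,p2,q2]"
  and m4: "\<And>x1 y1 x2 y2 x3 y3 x4 y4. distinct [x1,y1,x2,y2,x3,y3,x4,y4] \<Longrightarrow> adj x1 y1 \<Longrightarrow> adj x2 y2 \<Longrightarrow> adj x3 y3 \<Longrightarrow> adj x4 y4 \<Longrightarrow> \<not> distinct [col x1 y1, col x2 y2, col x3 y3, col x4 y4]"
  and e: "adj p1 q1" "adj p2 q2"
  shows "(adj a1 b \<longrightarrow> adj a2 c \<longrightarrow> \<not> distinct [col a1 b, col a2 c, col p1 q1, col p2 q2]) \<and>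
   (adj a1 b \<longrightarrow> adj a3 c \<longrightarrow> \<not> distinct [col a1 b, col a3 c, col p1 q1, col p2 q2]) \<and>
   (adj a2 b \<longrightarrow> adj a1 c \<longrightarrow> \<not> distinct [col a2 b, col a1 c, col p1 q1, col p2 q2]) \<and>
   (adj a2 b \<longrightarrow> adj a3 c \<longrightarrow> \<not> distinct [col a2 b, col a3 c, col p1 q1, col p2 q2]) \<and>
   (adj a3 b \<longrightarrow> adj a1 c \<longrightarrow> \<not> distinct [col a3 b, col a1 c, col p1 q1, col p2 q2]) \<and>
   (adj a3 b \<longrightarrow> adj a2 c \<longrightarrow> \<not> distinct [col a3 b, col a2 c, col p1 q1, col p2 q2])"
  by (intro conjI impI; rule m4) (use d e in auto)

lemma main8a:
  fixes col :: "'a \<Rightarrow> 'a \<Rightarrow> 'b"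
  assumes d: "distinct [a1,a2,a3,b1,b2,b3,c1,c2,c3]"
  and m4: "\<And>x1 y1 x2 y2 x3 y3 x4 y4. distinct [x1,y1,x2,y2,x3,y3,x4,y4] \<Longrightarrow> adj x1 y1 \<Longrightarrow> adj x2 y2 \<Longrightarrow> adj x3 y3 \<Longrightarrow> adj x4 y4 \<Longrightarrow> \<not> distinct [col x1 y1, col x2 y2, col x3 y3, col x4 y4]"
  and pr: "\<And>x y z. adj x y \<Longrightarrow> adj x z \<Longrightarrow> y\<noteq>z \<Longrightarrow> col x y \<noteq> col x z"
  and sy: "\<And>x y. col x y = col y x" and sa: "\<And>x y. adj x y = adj y x"
  and bc_b1_c1: "adj b1 c1" and bc_b1_c2: "adj b1 c2" and bc_b1_c3: "adj b1 c3"
  and bc_b2_c1: "adj b2 c1" and bc_b2_c2: "adj b2 c2" and bc_b2_c3: "adj b2 c3"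
  and bc_b3_c1: "adj b3 c1" and bc_b3_c2: "adj b3 c2"
  and al: "col b1 c1 = col b2 c3" "col b1 c2 = col b3 c1" "col b2 c2 = col b1 c3" "col b2 c1 = col b3 c2"
  shows "np {b1,b2,b3} {a1,a2,a3} adj + np {c1,c2,c3} {a1,a2,a3} adj \<le> 13"
proof -
  note bc = bc_b1_c1 bc_b1_c2 bc_b1_c3 bc_b2_c1 bc_b2_c2 bc_b2_c3 bc_b3_c1 bc_b3_c2
  have C1_b1_c1: "adj a1 b1 \<Longrightarrow> adj a2 b1 \<Longrightarrow> adj a3 b1 \<Longrightarrow> adj a1 c1 \<Longrightarrow> adj a2 c1 \<Longrightarrow> adj a3 c1 \<Longrightarrow> False"
  proof -
    assume H: "adj a1 b1" "adj a2 b1" "adj a3 b1" "adj a1 c1" "adj a2 c1" "adj a3 c1"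
    have L: "(adj a1 b1 \<longrightarrow> adj a2 c1 \<longrightarrow> \<not> distinct [col a1 b1, col a2 c1, col b2 c3, col b3 c2]) \<and> (adj a1 b1 \<longrightarrow> adj a3 c1 \<longrightarrow> \<not> distinct [col a1 b1, col a3 c1, col b2 c3, col b3 c2]) \<and> (adj a2 b1 \<longrightarrow> adj a1 c1 \<longrightarrow> \<not> distinct [col a2 b1, col a1 c1, col b2 c3, col b3 c2]) \<and> (adj a2 b1 \<longrightarrow> adj a3 c1 \<longrightarrow> \<not> distinct [col a2 b1, col a3 c1, col b2 c3, col b3 c2]) \<and> (adj a3 b1 \<longrightarrow> adj a1 c1 \<longrightarrow> \<not> distinct [col a3 b1, col a1 c1, col b2 c3, col b3 c2]) \<and> (adj a3 b1 \<longrightarrow> adj a2 c1 \<longrightarrow> \<not> distinct [col a3 b1, col a2 c1, col b2 c3, col b3 c2])"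
      by (rule leftover[where adj=adj and col=col, OF _ m4 bc_b2_c3 bc_b3_c2]) (use d in auto)
    have pb: "\<And>y z. adj b1 y \<Longrightarrow> adj b1 z \<Longrightarrow> y\<noteq>z \<Longrightarrow> col y b1 \<noteq> col z b1" using pr sy by metis
    have pc: "\<And>y z. adj c1 y \<Longrightarrow> adj c1 z \<Longrightarrow> y\<noteq>z \<Longrightarrow> col y c1 \<noteq> col z c1" using pr sy by metis
    show False using L H pb pc bc al d sa sy by simp (smt (verit))
  qed
  have C1_b1_c2: "adj a1 b1 \<Longrightarrow> adj a2 b1 \<Longrightarrow> adj a3 b1 \<Longrightarrow> adj a1 c2 \<Longrightarrow> adj a2 c2 \<Longrightarrow> adj a3 c2 \<Longrightarrow> False"
  proof -
    assume H: "adj a1 b1" "adj a2 b1" "adj a3 b1" "adj a1 c2" "adj a2 c2" "adj a3 c2"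
    have L: "(adj a1 b1 \<longrightarrow> adj a2 c2 \<longrightarrow> \<not> distinct [col a1 b1, col a2 c2, col b2 c3, col b3 c1]) \<and> (adj a1 b1 \<longrightarrow> adj a3 c2 \<longrightarrow> \<not> distinct [col a1 b1, col a3 c2, col b2 c3, col b3 c1]) \<and> (adj a2 b1 \<longrightarrow> adj a1 c2 \<longrightarrow> \<not> distinct [col a2 b1, col a1 c2, col b2 c3, col b3 c1]) \<and> (adj a2 b1 \<longrightarrow> adj a3 c2 \<longrightarrow> \<not> distinct [col a2 b1, col a3 c2, col b2 c3, col b3 c1]) \<and> (adj a3 b1 \<longrightarrow> adj a1 c2 \<longrightarrow> \<not> distinct [col a3 b1, col a1 c2, col b2 c3, col b3 c1]) \<and> (adj a3 b1 \<longrightarrow> adj a2 c2 \<longrightarrow> \<not> distinct [col a3 b1, col a2 c2, col b2 c3, col b3 c1])"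
      by (rule leftover[where adj=adj and col=col, OF _ m4 bc_b2_c3 bc_b3_c1]) (use d in auto)
    have pb: "\<And>y z. adj b1 y \<Longrightarrow> adj b1 z \<Longrightarrow> y\<noteq>z \<Longrightarrow> col y b1 \<noteq> col z b1" using pr sy by metis
    have pc: "\<And>y z. adj c2 y \<Longrightarrow> adj c2 z \<Longrightarrow> y\<noteq>z \<Longrightarrow> col y c2 \<noteq> col z c2" using pr sy by metis
    show False using L H pb pc bc al d sa sy by simp (smt (verit))
  qed
  have C1_b1_c3: "adj a1 b1 \<Longrightarrow> adj a2 b1 \<Longrightarrow> adj a3 b1 \<Longrightarrow> adj a1 c3 \<Longrightarrow> adj a2 c3 \<Longrightarrow> adj a3 c3 \<Longrightarrow> False"
  proof -
    assume H: "adj a1 b1" "adj a2 b1" "adj a3 b1" "adj a1 c3" "adj a2 c3" "adj a3 c3"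
    have L: "(adj a1 b1 \<longrightarrow> adj a2 c3 \<longrightarrow> \<not> distinct [col a1 b1, col a2 c3, col b2 c2, col b3 c1]) \<and> (adj a1 b1 \<longrightarrow> adj a3 c3 \<longrightarrow> \<not> distinct [col a1 b1, col a3 c3, col b2 c2, col b3 c1]) \<and> (adj a2 b1 \<longrightarrow> adj a1 c3 \<longrightarrow> \<not> distinct [col a2 b1, col a1 c3, col b2 c2, col b3 c1]) \<and> (adj a2 b1 \<longrightarrow> adj a3 c3 \<longrightarrow> \<not> distinct [col a2 b1, col a3 c3, col b2 c2, col b3 c1]) \<and> (adj a3 b1 \<longrightarrow> adj a1 c3 \<longrightarrow> \<not> distinct [col a3 b1, col a1 c3, col b2 c2, col b3 c1]) \<and> (adj a3 b1 \<longrightarrow> adj a2 c3 \<longrightarrow> \<not> distinct [col a3 b1, col a2 c3, col b2 c2, col b3 c1])"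
      by (rule leftover[where adj=adj and col=col, OF _ m4 bc_b2_c2 bc_b3_c1]) (use d in auto)
    have pb: "\<And>y z. adj b1 y \<Longrightarrow> adj b1 z \<Longrightarrow> y\<noteq>z \<Longrightarrow> col y b1 \<noteq> col z b1" using pr sy by metis
    have pc: "\<And>y z. adj c3 y \<Longrightarrow> adj c3 z \<Longrightarrow> y\<noteq>z \<Longrightarrow> col y c3 \<noteq> col z c3" using pr sy by metis
    show False using L H pb pc bc al d sa sy by simp (smt (verit))
  qed
  have C1_b2_c1: "adj a1 b2 \<Longrightarrow> adj a2 b2 \<Longrightarrow> adj a3 b2 \<Longrightarrow> adj a1 c1 \<Longrightarrow> adj a2 c1 \<Longrightarrow> adj a3 c1 \<Longrightarrow> False"
  proof -
    assume H: "adj a1 b2" "adj a2 b2" "adj a3 b2" "adj a1 c1" "adj a2 c1" "adj a3 c1"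
    have L: "(adj a1 b2 \<longrightarrow> adj a2 c1 \<longrightarrow> \<not> distinct [col a1 b2, col a2 c1, col b1 c3, col b3 c2]) \<and> (adj a1 b2 \<longrightarrow> adj a3 c1 \<longrightarrow> \<not> distinct [col a1 b2, col a3 c1, col b1 c3, col b3 c2]) \<and> (adj a2 b2 \<longrightarrow> adj a1 c1 \<longrightarrow> \<not> distinct [col a2 b2, col a1 c1, col b1 c3, col b3 c2]) \<and> (adj a2 b2 \<longrightarrow> adj a3 c1 \<longrightarrow> \<not> distinct [col a2 b2, col a3 c1, col b1 c3, col b3 c2]) \<and> (adj a3 b2 \<longrightarrow> adj a1 c1 \<longrightarrow> \<not> distinct [col a3 b2, col a1 c1, col b1 c3, col b3 c2]) \<and> (adj a3 b2 \<longrightarrow> adj a2 c1 \<longrightarrow> \<not> distinct [col a3 b2, col a2 c1, col b1 c3, col b3 c2])"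
      by (rule leftover[where adj=adj and col=col, OF _ m4 bc_b1_c3 bc_b3_c2]) (use d in auto)
    have pb: "\<And>y z. adj b2 y \<Longrightarrow> adj b2 z \<Longrightarrow> y\<noteq>z \<Longrightarrow> col y b2 \<noteq> col z b2" using pr sy by metis
    have pc: "\<And>y z. adj c1 y \<Longrightarrow> adj c1 z \<Longrightarrow> y\<noteq>z \<Longrightarrow> col y c1 \<noteq> col z c1" using pr sy by metis
    show False using L H pb pc bc al d sa sy by simp (smt (verit))
  qed
  have C1_b2_c2: "adj a1 b2 \<Longrightarrow> adj a2 b2 \<Longrightarrow> adj a3 b2 \<Longrightarrow> adj a1 c2 \<Longrightarrow> adj a2 c2 \<Longrightarrow> adj a3 c2 \<Longrightarrow> False"
  proof -
    assume H: "adj a1 b2" "adj a2 b2" "adj a3 b2" "adj a1 c2" "adj a2 c2" "adj a3 c2"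
    have L: "(adj a1 b2 \<longrightarrow> adj a2 c2 \<longrightarrow> \<not> distinct [col a1 b2, col a2 c2, col b1 c3, col b3 c1]) \<and> (adj a1 b2 \<longrightarrow> adj a3 c2 \<longrightarrow> \<not> distinct [col a1 b2, col a3 c2, col b1 c3, col b3 c1]) \<and> (adj a2 b2 \<longrightarrow> adj a1 c2 \<longrightarrow> \<not> distinct [col a2 b2, col a1 c2, col b1 c3, col b3 c1]) \<and> (adj a2 b2 \<longrightarrow> adj a3 c2 \<longrightarrow> \<not> distinct [col a2 b2, col a3 c2, col b1 c3, col b3 c1]) \<and> (adj a3 b2 \<longrightarrow> adj a1 c2 \<longrightarrow> \<not> distinct [col a3 b2, col a1 c2, col b1 c3, col b3 c1]) \<and> (adj a3 b2 \<longrightarrow> adj a2 c2 \<longrightarrow> \<not> distinct [col a3 b2, col a2 c2, col b1 c3, col b3 c1])"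
      by (rule leftover[where adj=adj and col=col, OF _ m4 bc_b1_c3 bc_b3_c1]) (use d in auto)
    have pb: "\<And>y z. adj b2 y \<Longrightarrow> adj b2 z \<Longrightarrow> y\<noteq>z \<Longrightarrow> col y b2 \<noteq> col z b2" using pr sy by metis
    have pc: "\<And>y z. adj c2 y \<Longrightarrow> adj c2 z \<Longrightarrow> y\<noteq>z \<Longrightarrow> col y c2 \<noteq> col z c2" using pr sy by metis
    show False using L H pb pc bc al d sa sy by simp (smt (verit))
  qed
  have C1_b2_c3: "adj a1 b2 \<Longrightarrow> adj a2 b2 \<Longrightarrow> adj a3 b2 \<Longrightarrow> adj a1 c3 \<Longrightarrow> adj a2 c3 \<Longrightarrow> adj a3 c3 \<Longrightarrow> False"
  proof -
    assume H: "adj a1 b2" "adj a2 b2" "adj a3 b2" "adj a1 c3" "adj a2 c3" "adj a3 c3"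
    have L: "(adj a1 b2 \<longrightarrow> adj a2 c3 \<longrightarrow> \<not> distinct [col a1 b2, col a2 c3, col b1 c1, col b3 c2]) \<and> (adj a1 b2 \<longrightarrow> adj a3 c3 \<longrightarrow> \<not> distinct [col a1 b2, col a3 c3, col b1 c1, col b3 c2]) \<and> (adj a2 b2 \<longrightarrow> adj a1 c3 \<longrightarrow> \<not> distinct [col a2 b2, col a1 c3, col b1 c1, col b3 c2]) \<and> (adj a2 b2 \<longrightarrow> adj a3 c3 \<longrightarrow> \<not> distinct [col a2 b2, col a3 c3, col b1 c1, col b3 c2]) \<and> (adj a3 b2 \<longrightarrow> adj a1 c3 \<longrightarrow> \<not> distinct [col a3 b2, col a1 c3, col b1 c1, col b3 c2]) \<and> (adj a3 b2 \<longrightarrow> adj a2 c3 \<longrightarrow> \<not> distinct [col a3 b2, col a2 c3, col b1 c1, col b3 c2])"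
      by (rule leftover[where adj=adj and col=col, OF _ m4 bc_b1_c1 bc_b3_c2]) (use d in auto)
    have pb: "\<And>y z. adj b2 y \<Longrightarrow> adj b2 z \<Longrightarrow> y\<noteq>z \<Longrightarrow> col y b2 \<noteq> col z b2" using pr sy by metis
    have pc: "\<And>y z. adj c3 y \<Longrightarrow> adj c3 z \<Longrightarrow> y\<noteq>z \<Longrightarrow> col y c3 \<noteq> col z c3" using pr sy by metis
    show False using L H pb pc bc al d sa sy by simp (smt (verit))
  qed
  have C1_b3_c1: "adj a1 b3 \<Longrightarrow> adj a2 b3 \<Longrightarrow> adj a3 b3 \<Longrightarrow> adj a1 c1 \<Longrightarrow> adj a2 c1 \<Longrightarrow> adj a3 c1 \<Longrightarrow> False"
  proof -
    assume H: "adj a1 b3" "adj a2 b3" "adj a3 b3" "adj a1 c1" "adj a2 c1" "adj a3 c1"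
    have L: "(adj a1 b3 \<longrightarrow> adj a2 c1 \<longrightarrow> \<not> distinct [col a1 b3, col a2 c1, col b1 c2, col b2 c3]) \<and> (adj a1 b3 \<longrightarrow> adj a3 c1 \<longrightarrow> \<not> distinct [col a1 b3, col a3 c1, col b1 c2, col b2 c3]) \<and> (adj a2 b3 \<longrightarrow> adj a1 c1 \<longrightarrow> \<not> distinct [col a2 b3, col a1 c1, col b1 c2, col b2 c3]) \<and> (adj a2 b3 \<longrightarrow> adj a3 c1 \<longrightarrow> \<not> distinct [col a2 b3, col a3 c1, col b1 c2, col b2 c3]) \<and> (adj a3 b3 \<longrightarrow> adj a1 c1 \<longrightarrow> \<not> distinct [col a3 b3, col a1 c1, col b1 c2, col b2 c3]) \<and> (adj a3 b3 \<longrightarrow> adj a2 c1 \<longrightarrow> \<not> distinct [col a3 b3, col a2 c1, col b1 c2, col b2 c3])"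
      by (rule leftover[where adj=adj and col=col, OF _ m4 bc_b1_c2 bc_b2_c3]) (use d in auto)
    have pb: "\<And>y z. adj b3 y \<Longrightarrow> adj b3 z \<Longrightarrow> y\<noteq>z \<Longrightarrow> col y b3 \<noteq> col z b3" using pr sy by metis
    have pc: "\<And>y z. adj c1 y \<Longrightarrow> adj c1 z \<Longrightarrow> y\<noteq>z \<Longrightarrow> col y c1 \<noteq> col z c1" using pr sy by metis
    show False using L H pb pc bc al d sa sy by simp (smt (verit))
  qed
  have C1_b3_c2: "adj a1 b3 \<Longrightarrow> adj a2 b3 \<Longrightarrow> adj a3 b3 \<Longrightarrow> adj a1 c2 \<Longrightarrow> adj a2 c2 \<Longrightarrow> adj a3 c2 \<Longrightarrow> False"
  proof -
    assume H: "adj a1 b3" "adj a2 b3" "adj a3 b3" "adj a1 c2" "adj a2 c2" "adj a3 c2"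
    have L: "(adj a1 b3 \<longrightarrow> adj a2 c2 \<longrightarrow> \<not> distinct [col a1 b3, col a2 c2, col b1 c3, col b2 c1]) \<and> (adj a1 b3 \<longrightarrow> adj a3 c2 \<longrightarrow> \<not> distinct [col a1 b3, col a3 c2, col b1 c3, col b2 c1]) \<and> (adj a2 b3 \<longrightarrow> adj a1 c2 \<longrightarrow> \<not> distinct [col a2 b3, col a1 c2, col b1 c3, col b2 c1]) \<and> (adj a2 b3 \<longrightarrow> adj a3 c2 \<longrightarrow> \<not> distinct [col a2 b3, col a3 c2, col b1 c3, col b2 c1]) \<and> (adj a3 b3 \<longrightarrow> adj a1 c2 \<longrightarrow> \<not> distinct [col a3 b3, col a1 c2, col b1 c3, col b2 c1]) \<and> (adj a3 b3 \<longrightarrow> adj a2 c2 \<longrightarrow> \<not> distinct [col a3 b3, col a2 c2, col b1 c3, col b2 c1])"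
      by (rule leftover[where adj=adj and col=col, OF _ m4 bc_b1_c3 bc_b2_c1]) (use d in auto)
    have pb: "\<And>y z. adj b3 y \<Longrightarrow> adj b3 z \<Longrightarrow> y\<noteq>z \<Longrightarrow> col y b3 \<noteq> col z b3" using pr sy by metis
    have pc: "\<And>y z. adj c2 y \<Longrightarrow> adj c2 z \<Longrightarrow> y\<noteq>z \<Longrightarrow> col y c2 \<noteq> col z c2" using pr sy by metis
    show False using L H pb pc bc al d sa sy by simp (smt (verit))
  qed
  have C1_b3_c3: "adj a1 b3 \<Longrightarrow> adj a2 b3 \<Longrightarrow> adj a3 b3 \<Longrightarrow> adj a1 c3 \<Longrightarrow> adj a2 c3 \<Longrightarrow> adj a3 c3 \<Longrightarrow> False"
  proof -
    assume H: "adj a1 b3" "adj a2 b3" "adj a3 b3" "adj a1 c3" "adj a2 c3" "adj a3 c3"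
    have L: "(adj a1 b3 \<longrightarrow> adj a2 c3 \<longrightarrow> \<not> distinct [col a1 b3, col a2 c3, col b1 c2, col b2 c1]) \<and> (adj a1 b3 \<longrightarrow> adj a3 c3 \<longrightarrow> \<not> distinct [col a1 b3, col a3 c3, col b1 c2, col b2 c1]) \<and> (adj a2 b3 \<longrightarrow> adj a1 c3 \<longrightarrow> \<not> distinct [col a2 b3, col a1 c3, col b1 c2, col b2 c1]) \<and> (adj a2 b3 \<longrightarrow> adj a3 c3 \<longrightarrow> \<not> distinct [col a2 b3, col a3 c3, col b1 c2, col b2 c1]) \<and> (adj a3 b3 \<longrightarrow> adj a1 c3 \<longrightarrow> \<not> distinct [col a3 b3, col a1 c3, col b1 c2, col b2 c1]) \<and> (adj a3 b3 \<longrightarrow> adj a2 c3 \<longrightarrow> \<not> distinct [col a3 b3, col a2 c3, col b1 c2, col b2 c1])"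
      by (rule leftover[where adj=adj and col=col, OF _ m4 bc_b1_c2 bc_b2_c1]) (use d in auto)
    have pb: "\<And>y z. adj b3 y \<Longrightarrow> adj b3 z \<Longrightarrow> y\<noteq>z \<Longrightarrow> col y b3 \<noteq> col z b3" using pr sy by metis
    have pc: "\<And>y z. adj c3 y \<Longrightarrow> adj c3 z \<Longrightarrow> y\<noteq>z \<Longrightarrow> col y c3 \<noteq> col z c3" using pr sy by metis
    show False using L H pb pc bc al d sa sy by simp (smt (verit))
  qed
  have C2_b1_c2: "\<And>i j. adj a1 b1 \<Longrightarrow> adj a2 b1 \<Longrightarrow> adj a3 b1 \<Longrightarrow> i \<in> {a1,a2,a3} \<Longrightarrow> j \<in> {a1,a2,a3} \<Longrightarrow> i \<noteq> j \<Longrightarrow> adj i c2 \<Longrightarrow> adj j c2 \<Longrightarrow> False"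
  proof -
    fix i j
    assume H: "adj a1 b1" "adj a2 b1" "adj a3 b1" "i \<in> {a1,a2,a3}" "j \<in> {a1,a2,a3}" "i \<noteq> j" "adj i c2" "adj j c2"
    have L: "(adj a1 b1 \<longrightarrow> adj a2 c2 \<longrightarrow> \<not> distinct [col a1 b1, col a2 c2, col b2 c3, col b3 c1]) \<and> (adj a1 b1 \<longrightarrow> adj a3 c2 \<longrightarrow> \<not> distinct [col a1 b1, col a3 c2, col b2 c3, col b3 c1]) \<and> (adj a2 b1 \<longrightarrow> adj a1 c2 \<longrightarrow> \<not> distinct [col a2 b1, col a1 c2, col b2 c3, col b3 c1]) \<and> (adj a2 b1 \<longrightarrow> adj a3 c2 \<longrightarrow> \<not> distinct [col a2 b1, col a3 c2, col b2 c3, col b3 c1]) \<and> (adj a3 b1 \<longrightarrow> adj a1 c2 \<longrightarrow> \<not> distinct [col a3 b1, col a1 c2, col b2 c3, col b3 c1]) \<and> (adj a3 b1 \<longrightarrow> adj a2 c2 \<longrightarrow> \<not> distinct [col a3 b1, col a2 c2, col b2 c3, col b3 c1])"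
      by (rule leftover[where adj=adj and col=col, OF _ m4 bc_b2_c3 bc_b3_c1]) (use d in auto)
    have pb: "\<And>y z. adj b1 y \<Longrightarrow> adj b1 z \<Longrightarrow> y\<noteq>z \<Longrightarrow> col y b1 \<noteq> col z b1" using pr sy by metis
    have pc: "\<And>y z. adj c2 y \<Longrightarrow> adj c2 z \<Longrightarrow> y\<noteq>z \<Longrightarrow> col y c2 \<noteq> col z c2" using pr sy by metis
    show False using L H pb pc bc al d sa sy by simp (smt (verit))
  qed
  have C2_b1_c3: "\<And>i j. adj a1 b1 \<Longrightarrow> adj a2 b1 \<Longrightarrow> adj a3 b1 \<Longrightarrow> i \<in> {a1,a2,a3} \<Longrightarrow> j \<in> {a1,a2,a3} \<Longrightarrow> i \<noteq> j \<Longrightarrow> adj i c3 \<Longrightarrow> adj j c3 \<Longrightarrow> False"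
  proof -
    fix i j
    assume H: "adj a1 b1" "adj a2 b1" "adj a3 b1" "i \<in> {a1,a2,a3}" "j \<in> {a1,a2,a3}" "i \<noteq> j" "adj i c3" "adj j c3"
    have L: "(adj a1 b1 \<longrightarrow> adj a2 c3 \<longrightarrow> \<not> distinct [col a1 b1, col a2 c3, col b2 c2, col b3 c1]) \<and> (adj a1 b1 \<longrightarrow> adj a3 c3 \<longrightarrow> \<not> distinct [col a1 b1, col a3 c3, col b2 c2, col b3 c1]) \<and> (adj a2 b1 \<longrightarrow> adj a1 c3 \<longrightarrow> \<not> distinct [col a2 b1, col a1 c3, col b2 c2, col b3 c1]) \<and> (adj a2 b1 \<longrightarrow> adj a3 c3 \<longrightarrow> \<not> distinct [col a2 b1, col a3 c3, col b2 c2, col b3 c1]) \<and> (adj a3 b1 \<longrightarrow> adj a1 c3 \<longrightarrow> \<not> distinct [col a3 b1, col a1 c3, col b2 c2, col b3 c1]) \<and> (adj a3 b1 \<longrightarrow> adj a2 c3 \<longrightarrow> \<not> distinct [col a3 b1, col a2 c3, col b2 c2, col b3 c1])"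
      by (rule leftover[where adj=adj and col=col, OF _ m4 bc_b2_c2 bc_b3_c1]) (use d in auto)
    have pb: "\<And>y z. adj b1 y \<Longrightarrow> adj b1 z \<Longrightarrow> y\<noteq>z \<Longrightarrow> col y b1 \<noteq> col z b1" using pr sy by metis
    have pc: "\<And>y z. adj c3 y \<Longrightarrow> adj c3 z \<Longrightarrow> y\<noteq>z \<Longrightarrow> col y c3 \<noteq> col z c3" using pr sy by metis
    show False using L H pb pc bc al d sa sy by simp (smt (verit))
  qed
  have C2_b2_c1: "\<And>i j. adj a1 b2 \<Longrightarrow> adj a2 b2 \<Longrightarrow> adj a3 b2 \<Longrightarrow> i \<in> {a1,a2,a3} \<Longrightarrow> j \<in> {a1,a2,a3} \<Longrightarrow> i \<noteq> j \<Longrightarrow> adj i c1 \<Longrightarrow> adj j c1 \<Longrightarrow> False"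
  proof -
    fix i j
    assume H: "adj a1 b2" "adj a2 b2" "adj a3 b2" "i \<in> {a1,a2,a3}" "j \<in> {a1,a2,a3}" "i \<noteq> j" "adj i c1" "adj j c1"
    have L: "(adj a1 b2 \<longrightarrow> adj a2 c1 \<longrightarrow> \<not> distinct [col a1 b2, col a2 c1, col b1 c3, col b3 c2]) \<and> (adj a1 b2 \<longrightarrow> adj a3 c1 \<longrightarrow> \<not> distinct [col a1 b2, col a3 c1, col b1 c3, col b3 c2]) \<and> (adj a2 b2 \<longrightarrow> adj a1 c1 \<longrightarrow> \<not> distinct [col a2 b2, col a1 c1, col b1 c3, col b3 c2]) \<and> (adj a2 b2 \<longrightarrow> adj a3 c1 \<longrightarrow> \<not> distinct [col a2 b2, col a3 c1, col b1 c3, col b3 c2]) \<and> (adj a3 b2 \<longrightarrow> adj a1 c1 \<longrightarrow> \<not> distinct [col a3 b2, col a1 c1, col b1 c3, col b3 c2]) \<and> (adj a3 b2 \<longrightarrow> adj a2 c1 \<longrightarrow> \<not> distinct [col a3 b2, col a2 c1, col b1 c3, col b3 c2])"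
      by (rule leftover[where adj=adj and col=col, OF _ m4 bc_b1_c3 bc_b3_c2]) (use d in auto)
    have pb: "\<And>y z. adj b2 y \<Longrightarrow> adj b2 z \<Longrightarrow> y\<noteq>z \<Longrightarrow> col y b2 \<noteq> col z b2" using pr sy by metis
    have pc: "\<And>y z. adj c1 y \<Longrightarrow> adj c1 z \<Longrightarrow> y\<noteq>z \<Longrightarrow> col y c1 \<noteq> col z c1" using pr sy by metis
    show False using L H pb pc bc al d sa sy by simp (smt (verit))
  qed
  have C2_b2_c3: "\<And>i j. adj a1 b2 \<Longrightarrow> adj a2 b2 \<Longrightarrow> adj a3 b2 \<Longrightarrow> i \<in> {a1,a2,a3} \<Longrightarrow> j \<in> {a1,a2,a3} \<Longrightarrow> i \<noteq> j \<Longrightarrow> adj i c3 \<Longrightarrow> adj j c3 \<Longrightarrow> False"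
  proof -
    fix i j
    assume H: "adj a1 b2" "adj a2 b2" "adj a3 b2" "i \<in> {a1,a2,a3}" "j \<in> {a1,a2,a3}" "i \<noteq> j" "adj i c3" "adj j c3"
    have L: "(adj a1 b2 \<longrightarrow> adj a2 c3 \<longrightarrow> \<not> distinct [col a1 b2, col a2 c3, col b1 c1, col b3 c2]) \<and> (adj a1 b2 \<longrightarrow> adj a3 c3 \<longrightarrow> \<not> distinct [col a1 b2, col a3 c3, col b1 c1, col b3 c2]) \<and> (adj a2 b2 \<longrightarrow> adj a1 c3 \<longrightarrow> \<not> distinct [col a2 b2, col a1 c3, col b1 c1, col b3 c2]) \<and> (adj a2 b2 \<longrightarrow> adj a3 c3 \<longrightarrow> \<not> distinct [col a2 b2, col a3 c3, col b1 c1, col b3 c2]) \<and> (adj a3 b2 \<longrightarrow> adj a1 c3 \<longrightarrow> \<not> distinct [col a3 b2, col a1 c3, col b1 c1, col b3 c2]) \<and> (adj a3 b2 \<longrightarrow> adj a2 c3 \<longrightarrow> \<not> distinct [col a3 b2, col a2 c3, col b1 c1, col b3 c2])"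
      by (rule leftover[where adj=adj and col=col, OF _ m4 bc_b1_c1 bc_b3_c2]) (use d in auto)
    have pb: "\<And>y z. adj b2 y \<Longrightarrow> adj b2 z \<Longrightarrow> y\<noteq>z \<Longrightarrow> col y b2 \<noteq> col z b2" using pr sy by metis
    have pc: "\<And>y z. adj c3 y \<Longrightarrow> adj c3 z \<Longrightarrow> y\<noteq>z \<Longrightarrow> col y c3 \<noteq> col z c3" using pr sy by metis
    show False using L H pb pc bc al d sa sy by simp (smt (verit))
  qed
  have C3_b1_c1: "\<And>i j. adj a1 c1 \<Longrightarrow> adj a2 c1 \<Longrightarrow> adj a3 c1 \<Longrightarrow> i \<in> {a1,a2,a3} \<Longrightarrow> j \<in> {a1,a2,a3} \<Longrightarrow> i \<noteq> j \<Longrightarrow> adj i b1 \<Longrightarrow> adj j b1 \<Longrightarrow> False"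
  proof -
    fix i j
    assume H: "adj a1 c1" "adj a2 c1" "adj a3 c1" "i \<in> {a1,a2,a3}" "j \<in> {a1,a2,a3}" "i \<noteq> j" "adj i b1" "adj j b1"
    have L: "(adj a1 b1 \<longrightarrow> adj a2 c1 \<longrightarrow> \<not> distinct [col a1 b1, col a2 c1, col b2 c3, col b3 c2]) \<and> (adj a1 b1 \<longrightarrow> adj a3 c1 \<longrightarrow> \<not> distinct [col a1 b1, col a3 c1, col b2 c3, col b3 c2]) \<and> (adj a2 b1 \<longrightarrow> adj a1 c1 \<longrightarrow> \<not> distinct [col a2 b1, col a1 c1, col b2 c3, col b3 c2]) \<and> (adj a2 b1 \<longrightarrow> adj a3 c1 \<longrightarrow> \<not> distinct [col a2 b1, col a3 c1, col b2 c3, col b3 c2]) \<and> (adj a3 b1 \<longrightarrow> adj a1 c1 \<longrightarrow> \<not> distinct [col a3 b1, col a1 c1, col b2 c3, col b3 c2]) \<and> (adj a3 b1 \<longrightarrow> adj a2 c1 \<longrightarrow> \<not> distinct [col a3 b1, col a2 c1, col b2 c3, col b3 c2])"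
      by (rule leftover[where adj=adj and col=col, OF _ m4 bc_b2_c3 bc_b3_c2]) (use d in auto)
    have pb: "\<And>y z. adj b1 y \<Longrightarrow> adj b1 z \<Longrightarrow> y\<noteq>z \<Longrightarrow> col y b1 \<noteq> col z b1" using pr sy by metis
    have pc: "\<And>y z. adj c1 y \<Longrightarrow> adj c1 z \<Longrightarrow> y\<noteq>z \<Longrightarrow> col y c1 \<noteq> col z c1" using pr sy by metis
    show False using L H pb pc bc al d sa sy by simp (smt (verit))
  qed
  have C3_b2_c2: "\<And>i j. adj a1 c2 \<Longrightarrow> adj a2 c2 \<Longrightarrow> adj a3 c2 \<Longrightarrow> i \<in> {a1,a2,a3} \<Longrightarrow> j \<in> {a1,a2,a3} \<Longrightarrow> i \<noteq> j \<Longrightarrow> adj i b2 \<Longrightarrow> adj j b2 \<Longrightarrow> False"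
  proof -
    fix i j
    assume H: "adj a1 c2" "adj a2 c2" "adj a3 c2" "i \<in> {a1,a2,a3}" "j \<in> {a1,a2,a3}" "i \<noteq> j" "adj i b2" "adj j b2"
    have L: "(adj a1 b2 \<longrightarrow> adj a2 c2 \<longrightarrow> \<not> distinct [col a1 b2, col a2 c2, col b1 c3, col b3 c1]) \<and> (adj a1 b2 \<longrightarrow> adj a3 c2 \<longrightarrow> \<not> distinct [col a1 b2, col a3 c2, col b1 c3, col b3 c1]) \<and> (adj a2 b2 \<longrightarrow> adj a1 c2 \<longrightarrow> \<not> distinct [col a2 b2, col a1 c2, col b1 c3, col b3 c1]) \<and> (adj a2 b2 \<longrightarrow> adj a3 c2 \<longrightarrow> \<not> distinct [col a2 b2, col a3 c2, col b1 c3, col b3 c1]) \<and> (adj a3 b2 \<longrightarrow> adj a1 c2 \<longrightarrow> \<not> distinct [col a3 b2, col a1 c2, col b1 c3, col b3 c1]) \<and> (adj a3 b2 \<longrightarrow> adj a2 c2 \<longrightarrow> \<not> distinct [col a3 b2, col a2 c2, col b1 c3, col b3 c1])"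
      by (rule leftover[where adj=adj and col=col, OF _ m4 bc_b1_c3 bc_b3_c1]) (use d in auto)
    have pb: "\<And>y z. adj b2 y \<Longrightarrow> adj b2 z \<Longrightarrow> y\<noteq>z \<Longrightarrow> col y b2 \<noteq> col z b2" using pr sy by metis
    have pc: "\<And>y z. adj c2 y \<Longrightarrow> adj c2 z \<Longrightarrow> y\<noteq>z \<Longrightarrow> col y c2 \<noteq> col z c2" using pr sy by metis
    show False using L H pb pc bc al d sa sy by simp (smt (verit))
  qed
  have C3_b3_c1: "\<And>i j. adj a1 c1 \<Longrightarrow> adj a2 c1 \<Longrightarrow> adj a3 c1 \<Longrightarrow> i \<in> {a1,a2,a3} \<Longrightarrow> j \<in> {a1,a2,a3} \<Longrightarrow> i \<noteq> j \<Longrightarrow> adj i b3 \<Longrightarrow> adj j b3 \<Longrightarrow> False"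
  proof -
    fix i j
    assume H: "adj a1 c1" "adj a2 c1" "adj a3 c1" "i \<in> {a1,a2,a3}" "j \<in> {a1,a2,a3}" "i \<noteq> j" "adj i b3" "adj j b3"
    have L: "(adj a1 b3 \<longrightarrow> adj a2 c1 \<longrightarrow> \<not> distinct [col a1 b3, col a2 c1, col b1 c2, col b2 c3]) \<and> (adj a1 b3 \<longrightarrow> adj a3 c1 \<longrightarrow> \<not> distinct [col a1 b3, col a3 c1, col b1 c2, col b2 c3]) \<and> (adj a2 b3 \<longrightarrow> adj a1 c1 \<longrightarrow> \<not> distinct [col a2 b3, col a1 c1, col b1 c2, col b2 c3]) \<and> (adj a2 b3 \<longrightarrow> adj a3 c1 \<longrightarrow> \<not> distinct [col a2 b3, col a3 c1, col b1 c2, col b2 c3]) \<and> (adj a3 b3 \<longrightarrow> adj a1 c1 \<longrightarrow> \<not> distinct [col a3 b3, col a1 c1, col b1 c2, col b2 c3]) \<and> (adj a3 b3 \<longrightarrow> adj a2 c1 \<longrightarrow> \<not> distinct [col a3 b3, col a2 c1, col b1 c2, col b2 c3])"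
      by (rule leftover[where adj=adj and col=col, OF _ m4 bc_b1_c2 bc_b2_c3]) (use d in auto)
    have pb: "\<And>y z. adj b3 y \<Longrightarrow> adj b3 z \<Longrightarrow> y\<noteq>z \<Longrightarrow> col y b3 \<noteq> col z b3" using pr sy by metis
    have pc: "\<And>y z. adj c1 y \<Longrightarrow> adj c1 z \<Longrightarrow> y\<noteq>z \<Longrightarrow> col y c1 \<noteq> col z c1" using pr sy by metis
    show False using L H pb pc bc al d sa sy by simp (smt (verit))
  qed
  have C3_b3_c2: "\<And>i j. adj a1 c2 \<Longrightarrow> adj a2 c2 \<Longrightarrow> adj a3 c2 \<Longrightarrow> i \<in> {a1,a2,a3} \<Longrightarrow> j \<in> {a1,a2,a3} \<Longrightarrow> i \<noteq> j \<Longrightarrow> adj i b3 \<Longrightarrow> adj j b3 \<Longrightarrow> False"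
  proof -
    fix i j
    assume H: "adj a1 c2" "adj a2 c2" "adj a3 c2" "i \<in> {a1,a2,a3}" "j \<in> {a1,a2,a3}" "i \<noteq> j" "adj i b3" "adj j b3"
    have L: "(adj a1 b3 \<longrightarrow> adj a2 c2 \<longrightarrow> \<not> distinct [col a1 b3, col a2 c2, col b1 c3, col b2 c1]) \<and> (adj a1 b3 \<longrightarrow> adj a3 c2 \<longrightarrow> \<not> distinct [col a1 b3, col a3 c2, col b1 c3, col b2 c1]) \<and> (adj a2 b3 \<longrightarrow> adj a1 c2 \<longrightarrow> \<not> distinct [col a2 b3, col a1 c2, col b1 c3, col b2 c1]) \<and> (adj a2 b3 \<longrightarrow> adj a3 c2 \<longrightarrow> \<not> distinct [col a2 b3, col a3 c2, col b1 c3, col b2 c1]) \<and> (adj a3 b3 \<longrightarrow> adj a1 c2 \<longrightarrow> \<not> distinct [col a3 b3, col a1 c2, col b1 c3, col b2 c1]) \<and> (adj a3 b3 \<longrightarrow> adj a2 c2 \<longrightarrow> \<not> distinct [col a3 b3, col a2 c2, col b1 c3, col b2 c1])"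
      by (rule leftover[where adj=adj and col=col, OF _ m4 bc_b1_c3 bc_b2_c1]) (use d in auto)
    have pb: "\<And>y z. adj b3 y \<Longrightarrow> adj b3 z \<Longrightarrow> y\<noteq>z \<Longrightarrow> col y b3 \<noteq> col z b3" using pr sy by metis
    have pc: "\<And>y z. adj c2 y \<Longrightarrow> adj c2 z \<Longrightarrow> y\<noteq>z \<Longrightarrow> col y c2 \<noteq> col z c2" using pr sy by metis
    show False using L H pb pc bc al d sa sy by simp (smt (verit))
  qed
  define D where "D v = card {a\<in>{a1,a2,a3}. adj a v}" for v
  have da: "distinct [a1,a2,a3]" using d by simp
  have F3: "\<And>v. D v = 3 \<Longrightarrow> adj a1 v \<and> adj a2 v \<and> adj a3 v"
  proof -
    fix v assume "D v = 3"
    then show "adj a1 v \<and> adj a2 v \<and> adj a3 v" using deg3[OF da, of "\<lambda>a. adj a v"] unfolding D_def by simp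
  qed
  have F2: "\<And>v. 2 \<le> D v \<Longrightarrow> \<exists>i j. i\<in>{a1,a2,a3} \<and> j\<in>{a1,a2,a3} \<and> i\<noteq>j \<and> adj i v \<and> adj j v"
  proof -
    fix v assume "2 \<le> D v"
    then show "\<exists>i j. i\<in>{a1,a2,a3} \<and> j\<in>{a1,a2,a3} \<and> i\<noteq>j \<and> adj i v \<and> adj j v"
      using deg2[where R="\<lambda>a. adj a v"] unfolding D_def by simp
  qed
  have Dle: "\<And>v. D v \<le> 3" unfolding D_def by (rule deg_le)
  have Dsum: "\<And>x y z. distinct [x,y,z] \<Longrightarrow> np {x,y,z} {a1,a2,a3} adj = D x + D y + D z"
  proof -
    fix x y z :: 'a assume dx: "distinct [x,y,z]"
    have e: "\<And>v. card {a\<in>{a1,a2,a3}. adj v a} = D v"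
    proof -
      fix v have "{a\<in>{a1,a2,a3}. adj v a} = {a\<in>{a1,a2,a3}. adj a v}" using sa by blast
      then show "card {a\<in>{a1,a2,a3}. adj v a} = D v" unfolding D_def by simp
    qed
    have "np {x,y,z} {a1,a2,a3} adj = (\<Sum>v\<in>{x,y,z}. card {a\<in>{a1,a2,a3}. adj v a})" by (rule np_sum) auto
    also have "\<dots> = (\<Sum>v\<in>{x,y,z}. D v)" by (simp only: e)
    also have "\<dots> = D x + D y + D z" using dx by simp
    finally show "np {x,y,z} {a1,a2,a3} adj = D x + D y + D z" .
  qed
  have K1_b1_c1: "\<not> (D b1 = 3 \<and> D c1 = 3)" using C1_b1_c1 F3 by blast
  have K1_b1_c2: "\<not> (D b1 = 3 \<and> D c2 = 3)" using C1_b1_c2 F3 by blast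
  have K1_b1_c3: "\<not> (D b1 = 3 \<and> D c3 = 3)" using C1_b1_c3 F3 by blast
  have K1_b2_c1: "\<not> (D b2 = 3 \<and> D c1 = 3)" using C1_b2_c1 F3 by blast
  have K1_b2_c2: "\<not> (D b2 = 3 \<and> D c2 = 3)" using C1_b2_c2 F3 by blast
  have K1_b2_c3: "\<not> (D b2 = 3 \<and> D c3 = 3)" using C1_b2_c3 F3 by blast
  have K1_b3_c1: "\<not> (D b3 = 3 \<and> D c1 = 3)" using C1_b3_c1 F3 by blast
  have K1_b3_c2: "\<not> (D b3 = 3 \<and> D c2 = 3)" using C1_b3_c2 F3 by blast
  have K1_b3_c3: "\<not> (D b3 = 3 \<and> D c3 = 3)" using C1_b3_c3 F3 by blast
  have K2_b1_c2: "\<not> (D b1 = 3 \<and> 2 \<le> D c2)" using C2_b1_c2 F3 F2 by blast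
  have K2_b1_c3: "\<not> (D b1 = 3 \<and> 2 \<le> D c3)" using C2_b1_c3 F3 F2 by blast
  have K2_b2_c1: "\<not> (D b2 = 3 \<and> 2 \<le> D c1)" using C2_b2_c1 F3 F2 by blast
  have K2_b2_c3: "\<not> (D b2 = 3 \<and> 2 \<le> D c3)" using C2_b2_c3 F3 F2 by blast
  have K3_b1_c1: "\<not> (D c1 = 3 \<and> 2 \<le> D b1)" using C3_b1_c1 F3 F2 by blast
  have K3_b2_c2: "\<not> (D c2 = 3 \<and> 2 \<le> D b2)" using C3_b2_c2 F3 F2 by blast
  have K3_b3_c1: "\<not> (D c1 = 3 \<and> 2 \<le> D b3)" using C3_b3_c1 F3 F2 by blast
  have K3_b3_c2: "\<not> (D c2 = 3 \<and> 2 \<le> D b3)" using C3_b3_c2 F3 F2 by blast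
  have "np {b1,b2,b3} {a1,a2,a3} adj + np {c1,c2,c3} {a1,a2,a3} adj = D b1 + D b2 + D b3 + D c1 + D c2 + D c3"
    using Dsum[of b1 b2 b3] Dsum[of c1 c2 c3] d by simp
  moreover have "D b1 + D b2 + D b3 + D c1 + D c2 + D c3 \<le> 13"
  proof -
    have le: "D b1 \<le> 3" "D b2 \<le> 3" "D b3 \<le> 3" "D c1 \<le> 3" "D c2 \<le> 3" "D c3 \<le> 3" using Dle by auto
    have "(D b1 \<noteq> 3 \<and> D b2 \<noteq> 3 \<and> D b3 \<noteq> 3) \<or> (D c1 \<noteq> 3 \<and> D c2 \<noteq> 3 \<and> D c3 \<noteq> 3)"
      using K1_b1_c1 K1_b1_c2 K1_b1_c3 K1_b2_c1 K1_b2_c2 K1_b2_c3 K1_b3_c1 K1_b3_c2 K1_b3_c3 by blast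
    then show ?thesis
    proof
      assume nb: "D b1 \<noteq> 3 \<and> D b2 \<noteq> 3 \<and> D b3 \<noteq> 3"
      then have b: "D b1 \<le> 2" "D b2 \<le> 2" "D b3 \<le> 2" using le by auto
      show ?thesis
      proof (cases "D c1 = 3")
        case True
        then have "D b1 \<le> 1" "D b3 \<le> 1" using K3_b1_c1 K3_b3_c1 by auto
        then show ?thesis using b le by linarith
      next
        case c1: False
        show ?thesis
        proof (cases "D c2 = 3")
          case True
          then have "D b2 \<le> 1" "D b3 \<le> 1" using K3_b2_c2 K3_b3_c2 by auto
          then show ?thesis using b le by linarith
        next
          case False
          then have "D c1 \<le> 2" "D c2 \<le> 2" using c1 le by auto
          then show ?thesis using b le by linarith
        qed
      qed
    next
      assume nc: "D c1 \<noteq> 3 \<and> D c2 \<noteq> 3 \<and> D c3 \<noteq> 3"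
      then have c: "D c1 \<le> 2" "D c2 \<le> 2" "D c3 \<le> 2" using le by auto
      show ?thesis
      proof (cases "D b1 = 3")
        case True
        then have "D c2 \<le> 1" "D c3 \<le> 1" using K2_b1_c2 K2_b1_c3 by auto
        then show ?thesis using c le by linarith
      next
        case b1: False
        show ?thesis
        proof (cases "D b2 = 3")
          case True
          then have "D c1 \<le> 1" "D c3 \<le> 1" using K2_b2_c1 K2_b2_c3 by auto
          then show ?thesis using c le by linarith
        next
          case False
          then have "D b1 \<le> 2" "D b2 \<le> 2" using b1 le by auto
          then show ?thesis using c le by linarith
        qed
      qed
    qed
  qed
  ultimately show ?thesis by simp
qed

lemma goodD:
  assumes "good A B C adj col"
  shows "card A = 3" "card B = 3" "card C = 3" "A\<inter>B={}" "A\<inter>C={}" "B\<inter>C={}"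
    "\<And>x y. adj x y = adj y x" "\<And>x y. col x y = col y x"
    "\<And>x y z. adj x y \<Longrightarrow> adj x z \<Longrightarrow> y\<noteq>z \<Longrightarrow> col x y \<noteq> col x z"
    "pmfree adj col A B" "pmfree adj col A C" "pmfree adj col B C"
    "\<And>x1 y1 x2 y2 x3 y3 x4 y4. distinct [x1,y1,x2,y2,x3,y3,x4,y4] \<Longrightarrow> adj x1 y1 \<Longrightarrow> adj x2 y2 \<Longrightarrow> adj x3 y3 \<Longrightarrow> adj x4 y4
      \<Longrightarrow> \<not> distinct [col x1 y1, col x2 y2, col x3 y3, col x4 y4]"
  using assms unfolding good_def by blast+

lemma main8:
  assumes g: "good A B C adj col" and b3: "b3 \<in> B" and c3: "c3 \<in> C" and m: "\<not> adj b3 c3"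
    and oth: "\<forall>b\<in>B. \<forall>c\<in>C. (b \<noteq> b3 \<or> c \<noteq> c3) \<longrightarrow> adj b c"
  shows "np A B adj + np A C adj + np B C adj \<le> 21"
proof -
  note G = goodD[OF g]
  have sa: "\<And>x y. adj x y = adj y x" and sy: "\<And>x y. col x y = col y x" using G by blast+
  have fin: "finite A" "finite B" "finite C" using G(1-3) by (auto intro: card_ge_0_finite)
  obtain a1 a2 a3 where A: "A = {a1,a2,a3}" "distinct [a1,a2,a3]" using G(1) by (rule card3E)
  obtain b1 b2 where B: "B = {b1,b2,b3}" "distinct [b1,b2,b3]" using G(2) b3 by (rule card3_at)
  obtain c1 c2 where C: "C = {c1,c2,c3}" "distinct [c1,c2,c3]" using G(3) c3 by (rule card3_at)
  have d: "distinct [a1,a2,a3,b1,b2,b3,c1,c2,c3]" using A B C G(4-6) by auto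
  have bc: "adj b1 c1" "adj b1 c2" "adj b1 c3" "adj b2 c1" "adj b2 c2" "adj b2 c3" "adj b3 c1" "adj b3 c2"
    using oth B C d by auto
  have npBC: "np B C adj \<le> 8" using np_le_miss1[of B C b3 c3 adj] fin G(2,3) b3 c3 m by blast
  have pmBC: "pmfree adj col {b1,b2,b3} {c1,c2,c3}" using G(12) B C by simp
  have "np B A adj + np C A adj \<le> 13"
  proof -
    from P8[OF pmBC B(2) C(2) G(9) sy sa bc]
    show ?thesis
    proof
      assume al: "col b1 c1 = col b2 c3 \<and> col b1 c2 = col b3 c1 \<and> col b2 c2 = col b1 c3 \<and> col b2 c1 = col b3 c2"
      have "np {b1,b2,b3} {a1,a2,a3} adj + np {c1,c2,c3} {a1,a2,a3} adj \<le> 13"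
        by (rule main8a[where adj=adj and col=col, OF d G(13) G(9) sy sa bc]) (use al in auto)
      then show ?thesis using A B C by simp
    next
      assume be: "col b1 c1 = col b3 c2 \<and> col b2 c1 = col b1 c3 \<and> col b2 c2 = col b3 c1 \<and> col b1 c2 = col b2 c3"
      have d': "distinct [a1,a2,a3,c1,c2,c3,b1,b2,b3]" using d by auto
      have bc': "adj c1 b1" "adj c1 b2" "adj c1 b3" "adj c2 b1" "adj c2 b2" "adj c2 b3" "adj c3 b1" "adj c3 b2"
        using bc sa by auto
      have al': "col c1 b1 = col c2 b3" "col c1 b2 = col c3 b1" "col c2 b2 = col c1 b3" "col c2 b1 = col c3 b2"
        using be sy by metis+
      have "np {c1,c2,c3} {a1,a2,a3} adj + np {b1,b2,b3} {a1,a2,a3} adj \<le> 13"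
        by (rule main8a[where adj=adj and col=col, OF d' G(13) G(9) sy sa bc' al'])
      then show ?thesis using A B C by simp
    qed
  qed
  moreover have "np A B adj = np B A adj" "np A C adj = np C A adj" using np_sym[of adj] sa by blast+
  ultimately show ?thesis using npBC by simp
qed

lemma core21:
  assumes g: "good A B C adj col"
  shows "np A B adj + np A C adj + np B C adj \<le> 21"
proof -
  note G = goodD[OF g]
  have sa: "\<And>x y. adj x y = adj y x" and sy: "\<And>x y. col x y = col y x" using G by blast+
  have fin: "finite A" "finite B" "finite C" using G(1-3) by (auto intro: card_ge_0_finite)
  define TM where "TM P Q \<longleftrightarrow> (\<exists>p q p' q'. p\<in>P \<and> q\<in>Q \<and> p'\<in>P \<and> q'\<in>Q \<and> (p,q) \<noteq> (p',q') \<and> \<not>adj p q \<and> \<not>adj p' q')" for P Q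
  have one: "\<And>P Q. pmfree adj col P Q \<Longrightarrow> card P = 3 \<Longrightarrow> card Q = 3 \<Longrightarrow> \<not> TM P Q \<Longrightarrow>
      \<exists>p\<in>P. \<exists>q\<in>Q. \<not>adj p q \<and> (\<forall>b\<in>P. \<forall>c\<in>Q. (b\<noteq>p \<or> c\<noteq>q) \<longrightarrow> adj b c)"
  proof -
    fix P Q assume h: "pmfree adj col P Q" "card P = 3" "card Q = 3" "\<not> TM P Q"
    obtain p q where pq: "p\<in>P" "q\<in>Q" "\<not>adj p q" using P9[OF h(1) G(9) sy sa h(2,3)] by blast
    have "\<forall>b\<in>P. \<forall>c\<in>Q. (b\<noteq>p \<or> c\<noteq>q) \<longrightarrow> adj b c" using h(4) pq unfolding TM_def by blast
    then show "\<exists>p\<in>P. \<exists>q\<in>Q. \<not>adj p q \<and> (\<forall>b\<in>P. \<forall>c\<in>Q. (b\<noteq>p \<or> c\<noteq>q) \<longrightarrow> adj b c)" using pq by blast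
  qed
  have seven: "\<And>P Q. finite P \<Longrightarrow> finite Q \<Longrightarrow> card P = 3 \<Longrightarrow> card Q = 3 \<Longrightarrow> TM P Q \<Longrightarrow> np P Q adj \<le> 7"
  proof -
    fix P Q assume h: "finite P" "finite Q" "card P = 3" "card Q = 3" "TM P Q"
    then obtain p q p' q' where "p\<in>P" "q\<in>Q" "p'\<in>P" "q'\<in>Q" "(p,q) \<noteq> (p',q')" "\<not>adj p q" "\<not>adj p' q'"
      unfolding TM_def by blast
    then show "np P Q adj \<le> 7" using np_le_miss2[OF h(1-4)] by blast
  qed
  have s1: "np A B adj = np B A adj" "np A C adj = np C A adj" "np B C adj = np C B adj"
    using np_sym[of adj] sa by blast+
  consider "TM A B \<and> TM A C \<and> TM B C" | "\<not> TM B C" | "\<not> TM A C" | "\<not> TM A B" by blast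
  then show ?thesis
  proof cases
    case 1
    then show ?thesis using seven[of A B] seven[of A C] seven[of B C] fin G(1-3) by simp
  next
    case 2
    then obtain p q where "p\<in>B" "q\<in>C" "\<not>adj p q" "\<forall>b\<in>B. \<forall>c\<in>C. (b\<noteq>p \<or> c\<noteq>q) \<longrightarrow> adj b c"
      using one[OF G(12) G(2,3)] by blast
    then show ?thesis using main8[OF g] by blast
  next
    case 3
    then obtain p q where pq: "p\<in>A" "q\<in>C" "\<not>adj p q" "\<forall>b\<in>A. \<forall>c\<in>C. (b\<noteq>p \<or> c\<noteq>q) \<longrightarrow> adj b c"
      using one[OF G(11) G(1,3)] by blast
    have "np B A adj + np B C adj + np A C adj \<le> 21" using main8[OF good_swap12[OF g] pq] .
    then show ?thesis using s1 by simp
  next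
    case 4
    then obtain p q where pq: "p\<in>A" "q\<in>B" "\<not>adj p q" "\<forall>b\<in>A. \<forall>c\<in>B. (b\<noteq>p \<or> c\<noteq>q) \<longrightarrow> adj b c"
      using one[OF G(10) G(1,2)] by blast
    have "np C A adj + np C B adj + np A B adj \<le> 21" using main8[OF good_swap12[OF good_swap23[OF g]] pq] .
    then show ?thesis using s1 by simp
  qed
qed

locale setting =
  fixes F M :: "'a set set" and A B C :: "'a set"
  assumes fin: "finite F" and uni: "uniform3 F" and lin: "linear_family F" and mm: "maximum_matching F M"
    and AM: "A \<in> M" and BM: "B \<in> M" and CM: "C \<in> M" and AB: "A \<noteq> B" and AC: "A \<noteq> C" and BC: "B \<noteq> C"
begin

definition adj :: "'a \<Rightarrow> 'a \<Rightarrow> bool" where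
  "adj x y \<longleftrightarrow> x \<noteq> y \<and> x \<in> A \<union> B \<union> C \<and> y \<in> A \<union> B \<union> C \<and> (\<exists>E\<in>D2_ABC F M A B C. x \<in> E \<and> y \<in> E)"

definition col :: "'a \<Rightarrow> 'a \<Rightarrow> 'a" where
  "col x y = (SOME u. u \<notin> X_M M \<and> {x,y,u} \<in> D2_ABC F M A B C)"

lemma MF: "M \<subseteq> F" using mm unfolding maximum_matching_def matching_def by blast

lemma Mdisj: "N1 \<in> M \<Longrightarrow> N2 \<in> M \<Longrightarrow> N1 \<noteq> N2 \<Longrightarrow> N1 \<inter> N2 = {}"
  using mm unfolding maximum_matching_def matching_def by blast

lemma card3F: "E \<in> F \<Longrightarrow> card E = 3" using uni unfolding uniform3_def by blast

lemma finE: "E \<in> F \<Longrightarrow> finite E" using card3F by (metis card.infinite zero_neq_numeral)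

lemma linF: "E \<in> F \<Longrightarrow> E' \<in> F \<Longrightarrow> E \<noteq> E' \<Longrightarrow> card (E \<inter> E') \<le> 1"
  using lin unfolding linear_family_def by blast

lemma VX: "A \<union> B \<union> C \<subseteq> X_M M" unfolding X_M_def using AM BM CM by blast

lemma DF: "D2_ABC F M A B C \<subseteq> F" unfolding D2_ABC_def D2_def by blast

lemma two_in: "E \<in> F \<Longrightarrow> E' \<in> F \<Longrightarrow> x \<noteq> y \<Longrightarrow> x \<in> E \<Longrightarrow> y \<in> E \<Longrightarrow> x \<in> E' \<Longrightarrow> y \<in> E' \<Longrightarrow> E = E'"
proof (rule ccontr)
  assume h: "E \<in> F" "E' \<in> F" "x \<noteq> y" "x \<in> E" "y \<in> E" "x \<in> E'" "y \<in> E'" "E \<noteq> E'"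
  have "card {x,y} \<le> card (E \<inter> E')" using h by (intro card_mono) (auto intro: finE)
  then show False using linF[OF h(1,2,8)] h(3) by simp
qed

lemma edge_struct:
  assumes "E \<in> D2_ABC F M A B C"
  shows "\<exists>x y u. E = {x,y,u} \<and> x \<noteq> y \<and> x \<in> A \<union> B \<union> C \<and> y \<in> A \<union> B \<union> C \<and> u \<notin> X_M M"
proof -
  have EF: "E \<in> F" using assms DF by blast
  have c2: "card (E \<inter> X_M M) = 2" using assms unfolding D2_ABC_def D2_def by blast
  have c2': "card (E \<inter> (A \<union> B \<union> C)) = 2" using assms unfolding D2_ABC_def by blast
  have fE: "finite E" using finE[OF EF] .
  have sub: "E \<inter> (A \<union> B \<union> C) \<subseteq> E \<inter> X_M M" using VX by blast
  have eq: "E \<inter> (A \<union> B \<union> C) = E \<inter> X_M M"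
    using card_subset_eq[OF _ sub] fE c2 c2' by simp
  obtain x y where xy: "E \<inter> (A \<union> B \<union> C) = {x,y}" "x \<noteq> y" using c2' unfolding card_2_iff by blast
  have "card (E - X_M M) = card E - card (E \<inter> X_M M)" using fE by (intro card_Diff_subset_Int) simp
  then have c1: "card (E - X_M M) = 1" using c2 card3F[OF EF] by simp
  obtain u where u: "E - X_M M = {u}" using c1 by (rule card_1_singletonE)
  have "E = (E \<inter> X_M M) \<union> (E - X_M M)" by blast
  then have "E = {x,y} \<union> {u}" using xy(1) eq u by simp
  then have "E = {x,y,u}" by auto
  moreover have "u \<notin> X_M M" using u by blast
  moreover have "x \<in> A \<union> B \<union> C" "y \<in> A \<union> B \<union> C" using xy(1) by blast+
  ultimately show ?thesis using xy(2) by blast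
qed

lemma col_eq:
  assumes E: "E \<in> D2_ABC F M A B C" "E = {x,y,u}" and xy: "x \<noteq> y" "x \<in> A \<union> B \<union> C" "y \<in> A \<union> B \<union> C" and u: "u \<notin> X_M M"
  shows "col x y = u"
proof -
  have ex: "\<exists>u. u \<notin> X_M M \<and> {x,y,u} \<in> D2_ABC F M A B C" using E u by blast
  have s: "col x y \<notin> X_M M \<and> {x,y,col x y} \<in> D2_ABC F M A B C"
    unfolding col_def by (rule someI_ex[OF ex])
  have F1: "{x,y,col x y} \<in> F" using s DF by blast
  have EF: "E \<in> F" using E DF by blast
  have xE: "x \<in> E" "y \<in> E" using E by auto
  have "{x,y,col x y} = E" by (rule two_in[OF F1 EF xy(1)]) (use xE in auto)
  then have "col x y \<in> {x,y,u}" using E by auto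
  moreover have "x \<in> X_M M" "y \<in> X_M M" using xy VX by auto
  ultimately show ?thesis using s by auto
qed

lemma adj_edge:
  assumes "adj x y"
  shows "{x,y,col x y} \<in> D2_ABC F M A B C \<and> col x y \<notin> X_M M \<and> x \<noteq> y \<and> x \<in> A \<union> B \<union> C \<and> y \<in> A \<union> B \<union> C"
proof -
  obtain E where E: "E \<in> D2_ABC F M A B C" "x \<in> E" "y \<in> E" and xy: "x \<noteq> y" "x \<in> A \<union> B \<union> C" "y \<in> A \<union> B \<union> C"
    using assms unfolding adj_def by blast
  obtain x' y' u where s: "E = {x',y',u}" "x' \<noteq> y'" "u \<notin> X_M M" using edge_struct[OF E(1)] by blast
  have xX: "x \<in> X_M M" "y \<in> X_M M" using xy VX by auto
  have "x \<noteq> u" "y \<noteq> u" using xX s(3) by auto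
  then have "x \<in> {x',y'}" "y \<in> {x',y'}" using E(2,3) s(1) by auto
  then have "{x',y'} = {x,y}" using xy(1) s(2) by auto
  then have Eq: "E = {x,y,u}" using s(1) by auto
  then have "col x y = u" using col_eq[OF E(1) Eq xy s(3)] by simp
  then show ?thesis using Eq E(1) s(3) xy by simp
qed

lemma adj_sym: "adj x y = adj y x" unfolding adj_def by blast

lemma col_sym: "col x y = col y x" unfolding col_def by (simp add: insert_commute)

lemma proper: "adj x y \<Longrightarrow> adj x z \<Longrightarrow> y \<noteq> z \<Longrightarrow> col x y \<noteq> col x z"
proof
  assume h: "adj x y" "adj x z" "y \<noteq> z" "col x y = col x z"
  note e1 = adj_edge[OF h(1)] and e2 = adj_edge[OF h(2)]
  have F1: "{x,y,col x y} \<in> F" and F2: "{x,z,col x z} \<in> F" using e1 e2 DF by blast+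
  have xX: "x \<in> X_M M" "z \<in> X_M M" using e1 e2 VX by blast+
  have "x \<noteq> col x y" using xX(1) e1 by auto
  then have "{x,y,col x y} = {x,z,col x z}" by (rule two_in[OF F1 F2]) (use h(4) in auto)
  then have "z \<in> {x,y,col x y}" by blast
  then show False using h(3) e2 xX h(4) by auto
qed

lemma finM: "finite M" using MF fin by (rule finite_subset)

lemma swap:
  assumes S: "S \<subseteq> M" and T: "T \<subseteq> F" "finite T" and Td: "\<forall>E\<in>T. \<forall>E'\<in>T. E \<noteq> E' \<longrightarrow> E \<inter> E' = {}"
    and TX: "\<forall>E\<in>T. E \<inter> X_M M \<subseteq> \<Union>S" and lt: "card S < card T"
  shows False
proof -
  define M' where "M' = (M - S) \<union> T"
  have NX: "\<And>N. N \<in> M \<Longrightarrow> N \<subseteq> X_M M" unfolding X_M_def by blast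
  have NS: "\<And>N. N \<in> M - S \<Longrightarrow> N \<inter> \<Union>S = {}"
  proof -
    fix N assume N: "N \<in> M - S"
    have "\<And>K. K \<in> S \<Longrightarrow> N \<inter> K = {}"
    proof -
      fix K assume K: "K \<in> S"
      then have "K \<in> M" "N \<noteq> K" using S N by auto
      then show "N \<inter> K = {}" using Mdisj[of N K] N by blast
    qed
    then show "N \<inter> \<Union>S = {}" by blast
  qed
  have c: "\<And>N E. N \<in> M - S \<Longrightarrow> E \<in> T \<Longrightarrow> N \<inter> E = {}"
  proof -
    fix N E assume NE: "N \<in> M - S" "E \<in> T"
    have "N \<subseteq> X_M M" using NX NE(1) by blast
    moreover have "E \<inter> X_M M \<subseteq> \<Union>S" using TX NE(2) by blast
    ultimately have "N \<inter> E \<subseteq> N \<inter> \<Union>S" by blast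
    then show "N \<inter> E = {}" using NS[OF NE(1)] by blast
  qed
  have "matching F M'"
    unfolding matching_def
  proof (intro conjI ballI impI)
    show "M' \<subseteq> F" unfolding M'_def using MF T by blast
  next
    fix N1 N2 assume h: "N1 \<in> M'" "N2 \<in> M'" "N1 \<noteq> N2"
    show "N1 \<inter> N2 = {}"
    proof (cases "N1 \<in> T")
      case t1: True
      show ?thesis
      proof (cases "N2 \<in> T")
        case True then show ?thesis using Td t1 h(3) by blast
      next
        case False then have "N2 \<in> M - S" using h(2) unfolding M'_def by blast
        then show ?thesis using c[of N2 N1] t1 by blast
      qed
    next
      case f1: False
      then have n1: "N1 \<in> M - S" using h(1) unfolding M'_def by blast
      show ?thesis
      proof (cases "N2 \<in> T")
        case True then show ?thesis using c[OF n1] by blast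
      next
        case False then have "N2 \<in> M - S" using h(2) unfolding M'_def by blast
        then show ?thesis using Mdisj[of N1 N2] n1 h(3) by blast
      qed
    qed
  qed
  then have le: "card M' \<le> card M" using mm unfolding maximum_matching_def by blast
  have dj: "(M - S) \<inter> T = {}"
  proof (rule ccontr)
    assume "(M - S) \<inter> T \<noteq> {}"
    then obtain E where E: "E \<in> M - S" "E \<in> T" by blast
    have "E \<subseteq> X_M M" using NX E(1) by blast
    moreover have "E \<inter> X_M M \<subseteq> \<Union>S" using TX E(2) by blast
    ultimately have "E \<subseteq> \<Union>S" by blast
    then have "E = {}" using NS[OF E(1)] by blast
    moreover have "E \<in> F" using E(2) T(1) by blast
    ultimately show False using card3F[of E] by simp
  qed
  have fS: "finite S" using S finM by (rule finite_subset)
  have "card M' = card (M - S) + card T" unfolding M'_def using dj finM T(2) by (simp add: card_Un_disjoint)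
  moreover have "card (M - S) = card M - card S" using S fS by (simp add: card_Diff_subset)
  moreover have "card S \<le> card M" using S finM by (simp add: card_mono)
  ultimately show False using le lt by linarith
qed
end

context setting
begin

lemma disj3: "a \<noteq> c \<Longrightarrow> a \<noteq> d \<Longrightarrow> b \<noteq> c \<Longrightarrow> b \<noteq> d \<Longrightarrow> u \<noteq> w \<Longrightarrow> u \<notin> Y \<Longrightarrow> w \<notin> Y
   \<Longrightarrow> a \<in> Y \<Longrightarrow> b \<in> Y \<Longrightarrow> c \<in> Y \<Longrightarrow> d \<in> Y \<Longrightarrow> {a,b,u} \<inter> {c,d,w} = {}"
  by auto

lemma adjX: "adj x y \<Longrightarrow> x \<in> X_M M \<and> y \<in> X_M M \<and> col x y \<notin> X_M M \<and> {x,y,col x y} \<in> F"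
  using adj_edge[of x y] VX DF by blast

lemma good_setting: "good A B C adj col"
proof -
  have cards: "card A = 3" "card B = 3" "card C = 3" using AM BM CM MF card3F by auto
  have disj: "A\<inter>B={}" "A\<inter>C={}" "B\<inter>C={}" using Mdisj AM BM CM AB AC BC by auto
  have pmf: "pmfree adj col P Q" if PQ: "P \<in> {A,B,C}" "Q \<in> {A,B,C}" "P \<noteq> Q" for P Q
    unfolding pmfree_def
  proof (intro allI impI notI)
    fix p1 p2 p3 q1 q2 q3
    assume h: "p1\<in>P" "p2\<in>P" "p3\<in>P" "q1\<in>Q" "q2\<in>Q" "q3\<in>Q" "distinct[p1,p2,p3]" "distinct[q1,q2,q3]"
      "adj p1 q1" "adj p2 q2" "adj p3 q3" "distinct [col p1 q1, col p2 q2, col p3 q3]"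
    have PQd: "P \<inter> Q = {}" using PQ disj by auto
    have dd: "distinct [p1,q1,p2,q2,p3,q3]" using h(1-8) PQd by auto
    note e1 = adjX[OF h(9)] and e2 = adjX[OF h(10)] and e3 = adjX[OF h(11)]
    define T where "T = {{p1,q1,col p1 q1},{p2,q2,col p2 q2},{p3,q3,col p3 q3}}"
    have d1: "{p1,q1,col p1 q1} \<inter> {p2,q2,col p2 q2} = {}" "{p1,q1,col p1 q1} \<inter> {p3,q3,col p3 q3} = {}"
      "{p2,q2,col p2 q2} \<inter> {p3,q3,col p3 q3} = {}"
      by (rule disj3[where Y="X_M M"]; use dd h(12) e1 e2 e3 in simp)+
    have ne: "{p1,q1,col p1 q1} \<noteq> {p2,q2,col p2 q2}" "{p1,q1,col p1 q1} \<noteq> {p3,q3,col p3 q3}"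
      "{p2,q2,col p2 q2} \<noteq> {p3,q3,col p3 q3}" using d1 by auto
    have cT: "card T = 3" unfolding T_def using ne by simp
    have "card {P,Q} = 2" using PQ(3) by simp
    show False
    proof (rule swap[of "{P,Q}" T])
      show "{P,Q} \<subseteq> M" using PQ AM BM CM by auto
      show "T \<subseteq> F" unfolding T_def using e1 e2 e3 by auto
      show "finite T" unfolding T_def by simp
      show "\<forall>E\<in>T. \<forall>E'\<in>T. E \<noteq> E' \<longrightarrow> E \<inter> E' = {}" unfolding T_def using d1 by auto
      show "\<forall>E\<in>T. E \<inter> X_M M \<subseteq> \<Union>{P,Q}" unfolding T_def using e1 e2 e3 h(1-6) by auto
      show "card {P,Q} < card T" using cT \<open>card {P,Q} = 2\<close> by simp
    qed
  qed
  have m4: "\<forall>x1 y1 x2 y2 x3 y3 x4 y4. distinct [x1,y1,x2,y2,x3,y3,x4,y4] \<longrightarrow> adj x1 y1 \<longrightarrow> adj x2 y2 \<longrightarrow> adj x3 y3 \<longrightarrow> adj x4 y4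
      \<longrightarrow> \<not> distinct [col x1 y1, col x2 y2, col x3 y3, col x4 y4]"
  proof (intro allI impI notI)
    fix x1 y1 x2 y2 x3 y3 x4 y4
    assume h: "distinct [x1,y1,x2,y2,x3,y3,x4,y4]" "adj x1 y1" "adj x2 y2" "adj x3 y3" "adj x4 y4"
      "distinct [col x1 y1, col x2 y2, col x3 y3, col x4 y4]"
    note e1 = adjX[OF h(2)] and e2 = adjX[OF h(3)] and e3 = adjX[OF h(4)] and e4 = adjX[OF h(5)]
    define T where "T = {{x1,y1,col x1 y1},{x2,y2,col x2 y2},{x3,y3,col x3 y3},{x4,y4,col x4 y4}}"
    have d1: "{x1,y1,col x1 y1} \<inter> {x2,y2,col x2 y2} = {}" "{x1,y1,col x1 y1} \<inter> {x3,y3,col x3 y3} = {}"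
      "{x1,y1,col x1 y1} \<inter> {x4,y4,col x4 y4} = {}" "{x2,y2,col x2 y2} \<inter> {x3,y3,col x3 y3} = {}"
      "{x2,y2,col x2 y2} \<inter> {x4,y4,col x4 y4} = {}" "{x3,y3,col x3 y3} \<inter> {x4,y4,col x4 y4} = {}"
      by (rule disj3[where Y="X_M M"]; use h(1) h(6) e1 e2 e3 e4 in simp)+
    have ne: "{x1,y1,col x1 y1} \<noteq> {x2,y2,col x2 y2}" "{x1,y1,col x1 y1} \<noteq> {x3,y3,col x3 y3}"
      "{x1,y1,col x1 y1} \<noteq> {x4,y4,col x4 y4}" "{x2,y2,col x2 y2} \<noteq> {x3,y3,col x3 y3}"
      "{x2,y2,col x2 y2} \<noteq> {x4,y4,col x4 y4}" "{x3,y3,col x3 y3} \<noteq> {x4,y4,col x4 y4}" using d1 by auto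
    have cT: "card T = 4" unfolding T_def using ne by simp
    have cS: "card {A,B,C} = 3" using AB AC BC by simp
    have hx: "x1 \<in> A \<union> B \<union> C" "y1 \<in> A \<union> B \<union> C" "x2 \<in> A \<union> B \<union> C" "y2 \<in> A \<union> B \<union> C"
      "x3 \<in> A \<union> B \<union> C" "y3 \<in> A \<union> B \<union> C" "x4 \<in> A \<union> B \<union> C" "y4 \<in> A \<union> B \<union> C"
      using h(2-5) unfolding adj_def by blast+
    show False
    proof (rule swap[of "{A,B,C}" T])
      show "{A,B,C} \<subseteq> M" using AM BM CM by auto
      show "T \<subseteq> F" unfolding T_def using e1 e2 e3 e4 by auto
      show "finite T" unfolding T_def by simp
      show "\<forall>E\<in>T. \<forall>E'\<in>T. E \<noteq> E' \<longrightarrow> E \<inter> E' = {}" unfolding T_def using d1 by auto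
      show "\<forall>E\<in>T. E \<inter> X_M M \<subseteq> \<Union>{A,B,C}" unfolding T_def using e1 e2 e3 e4 hx by auto
      show "card {A,B,C} < card T" using cT cS by simp
    qed
  qed
  have sa: "\<forall>x y. adj x y = adj y x" using adj_sym by blast
  have sy: "\<forall>x y. col x y = col y x" using col_sym by blast
  have pr: "\<forall>x y z. adj x y \<longrightarrow> adj x z \<longrightarrow> y\<noteq>z \<longrightarrow> col x y \<noteq> col x z" using proper by blast
  have pab: "pmfree adj col A B" by (rule pmf) (use AB in auto)
  have pac: "pmfree adj col A C" by (rule pmf) (use AC in auto)
  have pbc: "pmfree adj col B C" by (rule pmf) (use BC in auto)
  show ?thesis unfolding good_def
    using cards disj sa sy pr pab pac pbc m4 by (intro conjI) assumption+
qed

definition Dpq :: "'a set \<Rightarrow> 'a set \<Rightarrow> 'a set set" where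
  "Dpq P Q = {E \<in> D2_ABC F M A B C. E \<inter> P \<noteq> {} \<and> E \<inter> Q \<noteq> {}}"

lemma Dpq_le:
  assumes PQ: "P \<subseteq> A \<union> B \<union> C" "Q \<subseteq> A \<union> B \<union> C" "P \<inter> Q = {}" "finite P" "finite Q"
  shows "card (Dpq P Q) \<le> np P Q adj"
proof -
  have sub: "Dpq P Q \<subseteq> (\<lambda>(p,q). {p,q,col p q}) ` {(p,q). p\<in>P \<and> q\<in>Q \<and> adj p q}"
  proof
    fix E assume "E \<in> Dpq P Q"
    then obtain p q where E: "E \<in> D2_ABC F M A B C" "p \<in> E" "p \<in> P" "q \<in> E" "q \<in> Q" unfolding Dpq_def by blast
    have pq: "p \<noteq> q" using E PQ(3) by blast
    have a: "adj p q" unfolding adj_def using E pq PQ by blast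
    note e = adj_edge[OF a]
    have "E = {p,q,col p q}" using two_in[of E "{p,q,col p q}" p q] E e DF pq by blast
    then show "E \<in> (\<lambda>(p,q). {p,q,col p q}) ` {(p,q). p\<in>P \<and> q\<in>Q \<and> adj p q}" using E a by blast
  qed
  have fin: "finite {(p,q). p\<in>P \<and> q\<in>Q \<and> adj p q}"
    by (rule finite_subset[of _ "P \<times> Q"]) (use PQ in auto)
  have "card (Dpq P Q) \<le> card ((\<lambda>(p,q). {p,q,col p q}) ` {(p,q). p\<in>P \<and> q\<in>Q \<and> adj p q})"
    using sub fin by (intro card_mono) auto
  also have "\<dots> \<le> card {(p,q). p\<in>P \<and> q\<in>Q \<and> adj p q}" using fin by (rule card_image_le)
  finally show ?thesis unfolding np_def .
qed

lemma D_cover: "D2_ABC F M A B C \<subseteq> Dpq A B \<union> Dpq A C \<union> Dpq B C"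
proof
  fix E assume E: "E \<in> D2_ABC F M A B C"
  have EF: "E \<in> F" using E DF by blast
  have c2: "card (E \<inter> (A \<union> B \<union> C)) = 2" using E unfolding D2_ABC_def by blast
  have le1: "card (E \<inter> N) \<le> 1" if "N \<in> {A,B,C}" for N
  proof -
    have NF: "N \<in> F" using that AM BM CM MF by blast
    have "E \<noteq> N"
    proof
      assume "E = N"
      then have "E \<inter> (A \<union> B \<union> C) = E" using that by blast
      then show False using c2 card3F[OF EF] by simp
    qed
    then show ?thesis using linF[OF EF NF] by blast
  qed
  have fE: "finite E" using finE[OF EF] .
  show "E \<in> Dpq A B \<union> Dpq A C \<union> Dpq B C"
  proof (rule ccontr)
    assume "E \<notin> Dpq A B \<union> Dpq A C \<union> Dpq B C"
    then have "\<not>(E \<inter> A \<noteq> {} \<and> E \<inter> B \<noteq> {})" "\<not>(E \<inter> A \<noteq> {} \<and> E \<inter> C \<noteq> {})" "\<not>(E \<inter> B \<noteq> {} \<and> E \<inter> C \<noteq> {})"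
      unfolding Dpq_def using E by auto
    then have "E \<inter> (A \<union> B \<union> C) = E \<inter> A \<or> E \<inter> (A \<union> B \<union> C) = E \<inter> B \<or> E \<inter> (A \<union> B \<union> C) = E \<inter> C"
      by blast
    then show False using le1[of A] le1[of B] le1[of C] c2 by auto
  qed
qed

lemma final_bound: "card (D2_ABC F M A B C) \<le> 21"
proof -
  have cards: "card A = 3" "card B = 3" "card C = 3" using AM BM CM MF card3F by auto
  then have fin3: "finite A" "finite B" "finite C" by (auto intro: card_ge_0_finite)
  have disj: "A\<inter>B={}" "A\<inter>C={}" "B\<inter>C={}" using Mdisj AM BM CM AB AC BC by auto
  have fD: "finite (Dpq A B)" "finite (Dpq A C)" "finite (Dpq B C)"
    unfolding Dpq_def using fin DF by (auto intro: finite_subset)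
  have "card (D2_ABC F M A B C) \<le> card (Dpq A B \<union> Dpq A C \<union> Dpq B C)"
    using D_cover fD by (intro card_mono) auto
  also have "\<dots> \<le> card (Dpq A B) + card (Dpq A C) + card (Dpq B C)"
    by (meson add_mono_thms_linordered_semiring(3) card_Un_le le_trans)
  also have "\<dots> \<le> np A B adj + np A C adj + np B C adj"
    using Dpq_le[of A B] Dpq_le[of A C] Dpq_le[of B C] disj fin3 by (intro add_mono) auto
  also have "\<dots> \<le> 21" by (rule core21[OF good_setting])
  finally show ?thesis .
qed

end

theorem proposition5:
  fixes F M :: "'a set set" and A B C :: "'a set"
  assumes "finite F"
    and "uniform3 F"
    and "linear_family F"
    and "maximum_matching F M"
    and "A \<in> M" and "B \<in> M" and "C \<in> M"
    and "A \<noteq> B" and "A \<noteq> C" and "B \<noteq> C"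
  shows "card (D2_ABC F M A B C) \<le> 21"
proof -
  interpret setting F M A B C using assms by unfold_locales
  show ?thesis by (rule final_bound)
qed

end
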